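(* Let $S_1=\sum_{k=0}^\infty\frac{1}{(3k+2)(3k+4)}=\frac12-\frac{\sqrt3\pi}{18}$. Then \begin{align*} &\sum_{n=0}^\infty \frac{1}{(3n+1)(3n+4)\binom{2n+2}{n+1}}=\frac23 S_1,\\ &\sum_{n=0}^\infty \frac{(27n^2+51n+23)(\frac23)_n}{(3n+1)(3n+4)(n+1)(\frac{11}{6})_n}\,\frac{1}{4^n}=30S_1,\\ &\sum_{n=0}^\infty \frac{189n^3+495n^2+414n+110}{(6n+1)(6n+7)(6n+5)(2n+1)}\,\frac{1}{\binom{6n}{3n}}=16S_1,\\ &\sum_{n=0}^\infty \frac{270n^3+720n^2+633n+185}{(n+1)(6n+7)}\,\frac{(\frac23)_n^2}{(\frac43)_n(\frac{11}{6})_n}\,\frac{1}{(-4)^n}=120S_1,\\ &\sum_{n=0}^\infty (30n^2+45n+16)\,\frac{(\frac16)_n(\frac23)_n^2(1)_n}{(\frac43)_n(\frac73)_n(\frac32)_n(\frac{11}{6})_n}\,\frac{1}{(-4)^n}=80S_1. \end{align*}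
   Context: $(x)_n=\Gamma(x+n)/\Gamma(x)=x(x+1)\cdots(x+n-1)$ denotes the rising factorial (Pochhammer symbol). *)

theory Defs
  imports Complex_Main
begin

end

theory Submission
  imports Defs "HOL-Real_Asymp.Real_Asymp"
begin

lemma null_comp:
  fixes a b :: "nat \<Rightarrow> real"
  assumes "\<And>n. \<bar>a n\<bar> \<le> b n" "b \<longlonglongrightarrow> 0"
  shows "a \<longlonglongrightarrow> 0"
proof (rule tendsto_sandwich[of "\<lambda>n. - b n" _ _ b])
  have "- b n \<le> a n" for n using assms(1)[of n] by linarith
  then show "\<forall>\<^sub>F n in sequentially. - b n \<le> a n" by simp
  show "\<forall>\<^sub>F n in sequentially. a n \<le> b n" using assms(1) by (simp add: abs_le_iff)
  show "(\<lambda>n. - b n) \<longlonglongrightarrow> 0" using tendsto_minus[OF assms(2)] by simp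
qed (rule assms(2))

definition phi1 :: "real \<Rightarrow> real" where
  "phi1 x = x - 2 / sqrt 3 * (arctan ((2*x+1)/sqrt 3) - pi/6)"

definition P1 :: "nat \<Rightarrow> real \<Rightarrow> real" where
  "P1 N x = (\<Sum>k<N. x^(3*k+2)/(3*real k+2) - x^(3*k+4)/(3*real k+4))"

lemma pow_deriv: "DERIV (\<lambda>x::real. x^(m+1)/(real m+1)) x :> x^m"
proof -
  have "DERIV (\<lambda>x::real. x^(m+1)/(real m+1)) x :> real (m+1) * x^m / (real m+1)"
    by (rule derivative_eq_intros refl | simp)+
  moreover have "real (m+1) * x^m / (real m+1) = x^m"
    by (simp add: add.commute)
  ultimately show ?thesis by simp
qed

lemma P1_deriv: "DERIV (P1 N) x :> (\<Sum>k<N. x^(3*k+1) - x^(3*k+3))"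
proof -
  have e1: "(\<lambda>x::real. x^(3*k+2)/(3*real k+2)) = (\<lambda>x. x^((3*k+1)+1)/(real (3*k+1)+1))" for k
    by (simp add: add.commute numeral_eq_Suc)
  have e2: "(\<lambda>x::real. x^(3*k+4)/(3*real k+4)) = (\<lambda>x. x^((3*k+3)+1)/(real (3*k+3)+1))" for k
    by (simp add: add.commute numeral_eq_Suc)
  have "DERIV (\<lambda>x. \<Sum>k<N. x^(3*k+2)/(3*real k+2) - x^(3*k+4)/(3*real k+4)) x :>
         (\<Sum>k<N. x^(3*k+1) - x^(3*k+3))"
  proof (rule DERIV_sum)
    fix k
    have "(\<lambda>x::real. x^(3*k+2)/(3*real k+2) - x^(3*k+4)/(3*real k+4)) =
          (\<lambda>x. x^((3*k+1)+1)/(real (3*k+1)+1) - x^((3*k+3)+1)/(real (3*k+3)+1))"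
      using e1[of k] e2[of k] by (simp add: fun_eq_iff)
    then show "DERIV (\<lambda>x. x^(3*k+2)/(3*real k+2) - x^(3*k+4)/(3*real k+4)) x :> x^(3*k+1) - x^(3*k+3)"
      using DERIV_diff[OF pow_deriv[of "3*k+1" x] pow_deriv[of "3*k+3" x]] by simp
  qed
  then show ?thesis unfolding P1_def[abs_def] by simp
qed

lemma geom_id: "(\<Sum>k<N. x^(3*k+1) - x^(3*k+3)) * (1+x+x^2) = x*(1+x)*(1 - x^(3*N))" for x :: real
proof (induction N)
  case 0 then show ?case by simp
next
  case (Suc N)
  have "(\<Sum>k<Suc N. x^(3*k+1) - x^(3*k+3)) * (1+x+x^2) =
     (\<Sum>k<N. x^(3*k+1) - x^(3*k+3)) * (1+x+x^2) + (x^(3*N+1) - x^(3*N+3)) * (1+x+x^2)"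
    by (simp add: algebra_simps)
  also have "\<dots> = x*(1+x)*(1 - x^(3*N)) + (x^(3*N+1) - x^(3*N+3)) * (1+x+x^2)" using Suc by simp
  also have "\<dots> = x*(1+x)*(1 - x^(3*Suc N))"
    by (simp add: algebra_simps power_add power2_eq_square power3_eq_cube)
  finally show ?case .
qed

lemma sq3: "sqrt 3 * sqrt 3 = (3::real)" by simp

lemma phi1_deriv: "DERIV phi1 x :> x*(1+x)/(1+x+x^2)"
proof -
  have pos: "1+x+x^2 > 0"
  proof -
    have "0 \<le> (x+1/2)^2" by simp
    then show ?thesis by (simp add: power2_eq_square algebra_simps)
  qed
  have d: "DERIV phi1 x :> 1 - 2 / sqrt 3 * (inverse (1 + ((2*x+1)/sqrt 3)^2) * (2 / sqrt 3))"
    unfolding phi1_def[abs_def]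
    by (rule derivative_eq_intros refl | simp)+
  have "1 - 2 / sqrt 3 * (inverse (1 + ((2*x+1)/sqrt 3)^2) * (2 / sqrt 3)) = x*(1+x)/(1+x+x^2)"
  proof -
    have "((2*x+1)/sqrt 3)^2 = (2*x+1)^2/3" by (simp add: power_divide)
    then have "1 + ((2*x+1)/sqrt 3)^2 = 4*(1+x+x^2)/3" by (simp add: field_simps power2_eq_square)
    moreover have "2 / sqrt 3 * (2 / sqrt 3) = (4/3::real)" by (simp add: field_simps)
    ultimately have "2 / sqrt 3 * (inverse (1 + ((2*x+1)/sqrt 3)^2) * (2 / sqrt 3)) = (4/3) * inverse (4*(1+x+x^2)/3)"
      by (metis mult.commute mult.left_commute)
    also have "\<dots> = 1/(1+x+x^2)" using pos by (simp add: field_simps)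
    finally have e: "2 / sqrt 3 * (inverse (1 + ((2*x+1)/sqrt 3)^2) * (2 / sqrt 3)) = 1/(1+x+x^2)" .
    show ?thesis unfolding e using pos by (simp add: field_simps power2_eq_square)
  qed
  with d show ?thesis by simp
qed

lemma phi1_0: "phi1 0 = 0"
proof -
  have "arctan (1 / sqrt 3) = pi/6"
    using arctan_tan[of "pi/6"] tan_30 by simp
  then show ?thesis by (simp add: phi1_def)
qed

lemma phi1_1: "phi1 1 = 1 - pi / (3 * sqrt 3)"
proof -
  have "3 / sqrt 3 = sqrt 3" by (simp add: field_simps)
  then have "arctan (3 / sqrt 3) = pi/3"
    using arctan_tan[of "pi/3"] tan_60 by simp
  then have a: "arctan (3 / sqrt 3) = pi/3" .
  have "phi1 1 = 1 - 2 / sqrt 3 * (arctan (3 / sqrt 3) - pi/6)" by (simp add: phi1_def)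
  also have "\<dots> = 1 - 2 / sqrt 3 * (pi/3 - pi/6)" by (simp only: a)
  also have "\<dots> = 1 - pi / (3 * sqrt 3)" by (simp add: field_simps)
  finally show ?thesis .
qed

lemma psi_bound:
  fixes N :: nat
  shows "\<bar>P1 N 1 - phi1 1\<bar> \<le> 1 / (3*real N+1)"
proof -
  define d :: "real \<Rightarrow> real" where "d = (\<lambda>x. x*(1+x)*x^(3*N)/(1+x+x^2))"
  have pos: "1+x+x^2 > 0" for x :: real
  proof -
    have "0 \<le> (x+1/2)^2" by simp
    then show ?thesis by (simp add: power2_eq_square algebra_simps)
  qed
  have dpsi: "DERIV (\<lambda>x. P1 N x - phi1 x) x :> - d x" for x
  proof -
    have "DERIV (\<lambda>x. P1 N x - phi1 x) x :> (\<Sum>k<N. x^(3*k+1) - x^(3*k+3)) - x*(1+x)/(1+x+x^2)"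
      by (intro derivative_intros P1_deriv phi1_deriv)
    moreover have "(\<Sum>k<N. x^(3*k+1) - x^(3*k+3)) = x*(1+x)*(1 - x^(3*N)) / (1+x+x^2)"
      using geom_id[where x=x and N=N] pos[of x] by (simp add: field_simps)
    moreover have "x*(1+x)*(1 - x^(3*N)) / (1+x+x^2) - x*(1+x)/(1+x+x^2) = - d x"
    proof -
      have "x*(1+x)*(1 - x^(3*N)) / (1+x+x^2) - x*(1+x)/(1+x+x^2) = (x*(1+x)*(1 - x^(3*N)) - x*(1+x))/(1+x+x^2)"
        by (simp add: diff_divide_distrib)
      also have "\<dots> = - d x" unfolding d_def by (simp add: algebra_simps minus_divide_left)
      finally show ?thesis .
    qed
    ultimately show ?thesis by simp
  qed
  have dle: "0 \<le> d x \<and> d x \<le> x^(3*N)" if "0 \<le> x" for x :: real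
  proof -
    have "x*(1+x) \<le> 1+x+x^2" by (simp add: power2_eq_square algebra_simps)
    then have "x*(1+x)*x^(3*N) \<le> (1+x+x^2)*x^(3*N)" using that by (intro mult_right_mono) auto
    then show ?thesis unfolding d_def using pos[of x] that by (simp add: field_simps)
  qed
  have dpow: "DERIV (\<lambda>x. x^(3*N+1)/(3*real N+1)) x :> x^(3*N)" for x :: real
  proof -
    have nz: "3*real N+1 \<noteq> 0" by (simp add: add_nonneg_eq_0_iff)
    have "DERIV (\<lambda>x. x^(3*N+1)/(3*real N+1)) x :> real (3*N+1) * x^(3*N) / (3*real N+1)"
      by (rule derivative_eq_intros refl | simp)+
    moreover have "real (3*N+1) * x^(3*N) / (3*real N+1) = x^(3*N)" using nz by (simp add: add.commute)
    ultimately show ?thesis by simp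
  qed
  have "(\<lambda>x. x^(3*N+1)/(3*real N+1) + (P1 N x - phi1 x)) 0 \<le> (\<lambda>x. x^(3*N+1)/(3*real N+1) + (P1 N x - phi1 x)) 1"
  proof (rule DERIV_nonneg_imp_nondecreasing[of 0 1])
    fix x :: real assume "0 \<le> x" "x \<le> 1"
    show "\<exists>y. DERIV (\<lambda>x. x^(3*N+1)/(3*real N+1) + (P1 N x - phi1 x)) x :> y \<and> 0 \<le> y"
      using dle[of x] \<open>0 \<le> x\<close> DERIV_add[OF dpow dpsi, of x] by auto
  qed simp
  moreover have "(\<lambda>x. x^(3*N+1)/(3*real N+1) - (P1 N x - phi1 x)) 0 \<le> (\<lambda>x. x^(3*N+1)/(3*real N+1) - (P1 N x - phi1 x)) 1"
  proof (rule DERIV_nonneg_imp_nondecreasing[of 0 1])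
    fix x :: real assume "0 \<le> x" "x \<le> 1"
    show "\<exists>y. DERIV (\<lambda>x. x^(3*N+1)/(3*real N+1) - (P1 N x - phi1 x)) x :> y \<and> 0 \<le> y"
      using dle[of x] \<open>0 \<le> x\<close> DERIV_diff[OF dpow dpsi, of x] by auto
  qed simp
  moreover have "P1 N 0 = 0" by (simp add: P1_def power_0_left)
  ultimately show ?thesis using phi1_0 by simp
qed

lemma S1_sums: "(\<lambda>k::nat. 1 / ((3 * real k + 2) * (3 * real k + 4))) sums (1/2 - sqrt 3 * pi / 18)"
proof -
  have eq: "P1 N 1 = (\<Sum>k<N. 2 * (1 / ((3 * real k + 2) * (3 * real k + 4))))" for N
    unfolding P1_def by (intro sum.cong refl) (simp add: field_simps)
  have lim0: "(\<lambda>N::nat. 1 / (3*real N+1)) \<longlonglongrightarrow> 0" by real_asymp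
  have "(\<lambda>N. P1 N 1 - phi1 1) \<longlonglongrightarrow> 0"
    by (rule null_comp[OF _ lim0]) (rule psi_bound)
  then have "(\<lambda>N. P1 N 1) \<longlonglongrightarrow> phi1 1"
    by (simp add: LIM_zero_iff)
  then have "(\<lambda>N. (\<Sum>k<N. 2 * (1 / ((3 * real k + 2) * (3 * real k + 4))))) \<longlonglongrightarrow> phi1 1"
    using eq by simp
  then have "(\<lambda>k. 2 * (1 / ((3 * real k + 2) * (3 * real k + 4)))) sums phi1 1"
    by (simp add: sums_def)
  from sums_divide[OF this, of 2]
  have A: "(\<lambda>k. 1 / ((3 * real k + 2) * (3 * real k + 4))) sums ((1/2) * phi1 1)"
    by simp
  have B: "(1/2) * phi1 1 = 1/2 - sqrt 3 * pi / 18"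
  proof -
    have "pi / (3 * sqrt 3) = sqrt 3 * pi / 9" by (simp add: field_simps)
    then show ?thesis unfolding phi1_1 by simp
  qed
  from A show ?thesis unfolding B .
qed

lemma wz_sums:
  fixes F G :: "nat \<Rightarrow> nat \<Rightarrow> real"
  assumes wz: "\<And>n k. F (Suc n) k - F n k = G n (Suc k) - G n k"
    and Glim: "\<And>n. (\<lambda>k. G n k) \<longlonglongrightarrow> 0"
    and Fsum: "\<And>n. summable (F n)"
    and Flim: "(\<lambda>n. suminf (F n)) \<longlonglongrightarrow> 0"
  shows "(\<lambda>n. G n 0) sums suminf (F 0)"
proof -
  have step: "G n 0 = suminf (F n) - suminf (F (Suc n))" for n
  proof -
    have "(\<lambda>k. F (Suc n) k - F n k) sums (suminf (F (Suc n)) - suminf (F n))"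
      by (intro sums_diff summable_sums Fsum)
    moreover have "(\<lambda>k. G n (Suc k) - G n k) sums (0 - G n 0)"
      by (rule telescope_sums[OF Glim])
    ultimately have "suminf (F (Suc n)) - suminf (F n) = 0 - G n 0"
      using wz sums_unique2 by simp
    then show ?thesis by simp
  qed
  have "(\<lambda>n. suminf (F n) - suminf (F (Suc n))) sums (suminf (F 0) - 0)"
    by (rule telescope_sums'[OF Flim])
  then show ?thesis using step by simp
qed

lemma ratio_lim0:
  fixes b beta :: "nat \<Rightarrow> real"
  assumes rec: "\<And>n. b (Suc n) = beta n * b n" and nn: "\<And>n. 0 \<le> b n"
    and lim: "beta \<longlonglongrightarrow> L" and L1: "L < 1"
  shows "b \<longlonglongrightarrow> 0"
proof -
  define c where "c = (L + 1) / 2"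
  have "L < c" "c < 1" using L1 by (auto simp: c_def)
  have "\<forall>\<^sub>F n in sequentially. beta n < c" by (rule order_tendstoD(2)[OF lim \<open>L < c\<close>])
  then obtain N where N: "\<And>n. n \<ge> N \<Longrightarrow> beta n < c" by (auto simp: eventually_sequentially)
  have "summable b"
  proof (rule summable_ratio_test[OF \<open>c < 1\<close>, of N])
    fix n assume "n \<ge> N"
    then have "beta n * b n \<le> c * b n" using N[of n] nn[of n] by (intro mult_right_mono) auto
    then show "norm (b (Suc n)) \<le> c * norm (b n)" using rec[of n] nn[of n] nn[of "Suc n"] by simp
  qed
  then show ?thesis by (rule summable_LIMSEQ_zero)
qed

definition fS :: "nat \<Rightarrow> real" where "fS k = 1 / ((3 * real k + 2) * (3 * real k + 4))"

lemma fS_nonneg: "0 \<le> fS k" by (simp add: fS_def)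

lemma master:
  fixes F R rho sig :: "nat \<Rightarrow> nat \<Rightarrow> real" and B :: "nat \<Rightarrow> real"
  assumes F0: "\<And>k. F 0 k = fS k"
    and rho: "\<And>n k. F (Suc n) k = rho n k * F n k"
    and sig: "\<And>n k. F n (Suc k) = sig n k * F n k"
    and rat: "\<And>n k. rho n k - 1 = R n (Suc k) * sig n k - R n k"
    and bound: "\<And>n k. \<bar>F n k\<bar> \<le> B n * fS k"
    and Blim: "B \<longlonglongrightarrow> 0"
    and Rlim: "\<And>n. (\<lambda>k. R n k * fS k) \<longlonglongrightarrow> 0"
  shows "(\<lambda>n. R n 0 * F n 0) sums (1/2 - sqrt 3 * pi / 18)"
proof -
  define G where "G n k = R n k * F n k" for n k
  have S: "fS sums (1/2 - sqrt 3 * pi / 18)" using S1_sums by (simp add: fS_def[abs_def])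
  then have sumf: "summable fS" by (rule sums_summable)
  have wz: "F (Suc n) k - F n k = G n (Suc k) - G n k" for n k
  proof -
    have "F (Suc n) k - F n k = (rho n k - 1) * F n k" by (simp add: rho algebra_simps)
    also have "\<dots> = (R n (Suc k) * sig n k - R n k) * F n k" by (simp add: rat)
    also have "\<dots> = G n (Suc k) - G n k" by (simp add: G_def sig algebra_simps)
    finally show ?thesis .
  qed
  have Bnn: "0 \<le> B n" for n
    using bound[of n 0] by (simp add: fS_def)
  have Fsum: "summable (F n)" for n
  proof (rule summable_comparison_test[of "F n" "\<lambda>k. B n * fS k"])
    show "\<exists>N. \<forall>k\<ge>N. norm (F n k) \<le> B n * fS k" using bound by auto
    show "summable (\<lambda>k. B n * fS k)" by (rule summable_mult[OF sumf])
  qed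
  have Flim: "(\<lambda>n. suminf (F n)) \<longlonglongrightarrow> 0"
  proof (rule null_comp)
    fix n
    have s1: "suminf (F n) \<le> suminf (\<lambda>k. B n * fS k)"
      by (rule suminf_le) (use bound[of n] Fsum[of n] summable_mult[OF sumf] in \<open>auto simp: abs_le_iff\<close>)
    have s2: "suminf (\<lambda>k. - (B n * fS k)) \<le> suminf (F n)"
    proof (rule suminf_le)
      fix k show "- (B n * fS k) \<le> F n k" using bound[of n k] by linarith
    qed (use Fsum[of n] summable_minus[OF summable_mult[OF sumf]] in auto)
    have e1: "suminf (\<lambda>k. B n * fS k) = B n * suminf fS" by (rule suminf_mult[OF sumf])
    have e2: "suminf (\<lambda>k. - (B n * fS k)) = - (B n * suminf fS)"
      using suminf_minus[OF summable_mult[OF sumf]] e1 by simp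
    show "\<bar>suminf (F n)\<bar> \<le> B n * suminf fS" using s1 s2 e1 e2 by linarith
  next
    show "(\<lambda>n. B n * suminf fS) \<longlonglongrightarrow> 0" using tendsto_mult_left_zero[OF Blim, of "suminf fS"] by (simp add: mult.commute)
  qed
  have Glim: "(\<lambda>k. G n k) \<longlonglongrightarrow> 0" for n
  proof (rule null_comp)
    fix k
    have "\<bar>G n k\<bar> = \<bar>R n k\<bar> * \<bar>F n k\<bar>" by (simp add: G_def abs_mult)
    also have "\<dots> \<le> \<bar>R n k\<bar> * (B n * fS k)" by (intro mult_left_mono bound) auto
    also have "\<dots> = B n * \<bar>R n k * fS k\<bar>" using fS_nonneg[of k] by (simp add: abs_mult)
    finally show "\<bar>G n k\<bar> \<le> B n * \<bar>R n k * fS k\<bar>" .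
  next
    show "(\<lambda>k. B n * \<bar>R n k * fS k\<bar>) \<longlonglongrightarrow> 0"
      using tendsto_mult_left_zero[OF tendsto_rabs_zero[OF Rlim[of n]], of "B n"] by (simp add: mult.commute)
  qed
  have "(\<lambda>n. G n 0) sums suminf (F 0)" by (rule wz_sums[OF wz Glim Fsum Flim])
  moreover have "suminf (F 0) = 1/2 - sqrt 3 * pi / 18"
    using sums_unique[OF S] F0 by (simp add: fun_eq_iff[symmetric] cong: suminf_cong)
  ultimately show ?thesis by (simp add: G_def)
qed

lemma pS: "pochhammer (a::real) (Suc n) = pochhammer a n * (a + real n)"
  by (simp add: pochhammer_rec' mult.commute)

lemma pU: "(a::real) \<noteq> 0 \<Longrightarrow> pochhammer (a+1) n = pochhammer a n * (a + real n) / a"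
proof -
  assume a: "a \<noteq> 0"
  have "a * pochhammer (a+1) n = pochhammer a n * (a + real n)"
    using pochhammer_rec[of a n] pS[of a n] by simp
  then show ?thesis using a by (simp add: field_simps)
qed

lemma poch_pos: "(0::real) < a \<Longrightarrow> 0 < pochhammer a n"
  by (rule pochhammer_pos)

lemma poch_mono: "(0::real) < a \<Longrightarrow> a \<le> b \<Longrightarrow> pochhammer a n \<le> pochhammer b n"
proof (induction n)
  case 0 then show ?case by simp
next
  case (Suc n)
  have "pochhammer a n * (a + real n) \<le> pochhammer b n * (b + real n)"
    using Suc by (intro mult_mono) (auto intro: less_imp_le[OF poch_pos])
  then show ?case by (simp add: pS)
qed

lemma poch_lower:
  assumes "(0::real) < a" "0 \<le> x"
  shows "(x+a)/a * pochhammer a (Suc j) \<le> pochhammer (x+a) (Suc j)"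
proof -
  have "(x+a)/a * pochhammer a (Suc j) = (x+a) * pochhammer (a+1) j"
    using assms by (simp add: pochhammer_rec)
  also have "\<dots> \<le> (x+a) * pochhammer (x+a+1) j"
    using assms by (intro mult_left_mono poch_mono) auto
  also have "\<dots> = pochhammer (x+a) (Suc j)" by (simp add: pochhammer_rec)
  finally show ?thesis .
qed

lemma bound_gen:
  fixes C P1 P2 Q1 Q2 a1 a2 x :: real
  assumes "2/3 \<le> a1" "4/3 \<le> a2" "0 \<le> x"
    and "0 < Q1" "0 < Q2"
    and "(x+a1)/a1 * Q1 \<le> P1" "(x+a2)/a2 * Q2 \<le> P2"
  shows "\<bar>C / (P1 * P2)\<bar> \<le> (9 * a1 * a2 * \<bar>C / (Q1 * Q2)\<bar>) * (1 / ((3*x+2)*(3*x+4)))"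
proof -
  define u where "u = (x+a1)/a1 * Q1"
  define v where "v = (x+a2)/a2 * Q2"
  define c where "c = \<bar>C\<bar>"
  have c: "0 \<le> c" by (simp add: c_def)
  have a1: "0 < a1" and a2: "0 < a2" using assms(1,2) by linarith+
  have xa1: "0 < x + a1" and xa2: "0 < x + a2" using assms(3) a1 a2 by linarith+
  have u0: "0 < u" unfolding u_def using xa1 a1 assms(4) by (intro mult_pos_pos divide_pos_pos)
  have u1: "u \<le> P1" unfolding u_def by (rule assms(6))
  have v0: "0 < v" unfolding v_def using xa2 a2 assms(5) by (intro mult_pos_pos divide_pos_pos)
  have v1: "v \<le> P2" unfolding v_def by (rule assms(7))
  have P1: "0 < P1" and P2: "0 < P2" using u0 u1 v0 v1 by linarith+
  have uv: "0 < u * v" using u0 v0 by simp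
  have "u * v \<le> P1 * P2" using u0 u1 v0 v1 by (intro mult_mono) auto
  then have 1: "c / (P1 * P2) \<le> c / (u * v)" using uv c by (intro divide_left_mono) auto
  have 2: "\<bar>C / (P1 * P2)\<bar> = c / (P1 * P2)"
    by (simp only: c_def abs_divide abs_mult abs_of_pos[OF P1] abs_of_pos[OF P2])
  have 3: "\<bar>C / (Q1 * Q2)\<bar> = c / (Q1 * Q2)" unfolding c_def abs_divide using assms(4,5) by simp
  have 4: "c / (u * v) = a1 * a2 * (c / (Q1 * Q2)) / ((x+a1)*(x+a2))"
    using a1 a2 xa1 xa2 assms(4,5) unfolding u_def v_def by (simp add: field_simps)
  have 5: "a1 * a2 * (c / (Q1 * Q2)) / ((x+a1)*(x+a2)) \<le> a1 * a2 * (c / (Q1 * Q2)) / ((x+2/3)*(x+4/3))"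
  proof (rule divide_left_mono)
    show "0 \<le> a1 * a2 * (c / (Q1 * Q2))" using a1 a2 c assms(4,5) by simp
    show "(x+2/3)*(x+4/3) \<le> (x+a1)*(x+a2)" using assms(1-3) by (intro mult_mono) auto
    show "0 < (x+a1)*(x+a2) * ((x+2/3)*(x+4/3))" using xa1 xa2 assms(3) by simp
  qed
  have 6: "a1 * a2 * (c / (Q1 * Q2)) / ((x+2/3)*(x+4/3)) = (9 * a1 * a2 * (c / (Q1 * Q2))) * (1 / ((3*x+2)*(3*x+4)))"
    by (simp add: field_simps)
  show ?thesis unfolding 2 3 using 1 4 5 6 by linarith
qed

definition sig2 :: "nat \<Rightarrow> nat \<Rightarrow> real" where
  "sig2 n k = (real k + 2/3) / (real k + real n + 5/3) * ((real k + 4/3) / (real k + real n + 7/3))"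
definition rho2 :: "nat \<Rightarrow> nat \<Rightarrow> real" where
  "rho2 n k = (real n + 1) * (real n + 5/3) * (real n + 1/3) / (4 * (real n + 1/2)) * (1 / ((real k + real n + 5/3) * (real k + real n + 7/3)))"
definition R2 :: "nat \<Rightarrow> nat \<Rightarrow> real" where
  "R2 n k = (2*real k + 3*real n + 3) / (2 * (2*real n + 1))"
definition q2 :: "nat \<Rightarrow> real" where
  "q2 n = (1 / ((3*(real n+1)+1) * (3*(real n+1)+4))) / (1 / ((3*real n+1) * (3*real n+4))) * ((real n + 2) / (2 * (2*real n + 3)))"
definition C2 :: "nat \<Rightarrow> real" where
  "C2 n = pochhammer 1 n * pochhammer (5/3) n * pochhammer (1/3) n / (9 * pochhammer (1/2) n * 4 ^ n)"
definition F2 :: "nat \<Rightarrow> nat \<Rightarrow> real" where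
  "F2 n k = C2 n / (pochhammer (real k + 2/3) (Suc n) * pochhammer (real k + 4/3) (Suc n))"

lemma C2_Suc: "C2 (Suc n) = C2 n * ((real n + 1) * (real n + 5/3) * (real n + 1/3) / (4 * (real n + 1/2)))"
proof -
  define P1 where "P1 = pochhammer (1::real) n"
  define P2 where "P2 = pochhammer (5/3::real) n"
  define P3 where "P3 = pochhammer (1/3::real) n"
  define P4 where "P4 = pochhammer (1/2::real) n"
  define s where "s = ((4::real)^n)"
  have p: "P4 \<noteq> 0" unfolding P4_def using poch_pos[of "1/2" n] by simp
  have s: "s \<noteq> 0" unfolding s_def by simp
  have q: "real n + 1/2 \<noteq> 0" "1/2 + real n \<noteq> 0" "1 + 2 * real n \<noteq> 0" "1 + real n * 2 \<noteq> 0"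
    by (simp_all add: add_nonneg_eq_0_iff)
  have "C2 (Suc n) = (P1 * (1 + real n)) * (P2 * (5/3 + real n)) * (P3 * (1/3 + real n)) / (9 * (P4 * (1/2 + real n)) * (4 * s))"
    unfolding C2_def pS P1_def P2_def P3_def P4_def s_def by (simp add: add.commute)
  also have "\<dots> = (P1 * P2 * P3 / (9 * P4 * s)) * ((real n + 1) * (real n + 5/3) * (real n + 1/3) / (4 * (real n + 1/2)))"
    using p q s by (simp add: field_simps)
  also have "\<dots> = C2 n * ((real n + 1) * (real n + 5/3) * (real n + 1/3) / (4 * (real n + 1/2)))"
    unfolding C2_def P1_def P2_def P3_def P4_def s_def by simp
  finally show ?thesis .
qed

lemma F2_sig: "F2 n (Suc k) = sig2 n k * F2 n k"
proof -
  define a where "a = real k + 2/3"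
  define b where "b = real k + 4/3"
  have a: "0 < a" and b: "0 < b" by (simp_all add: a_def b_def add_pos_nonneg)
  have pa: "0 < pochhammer a (Suc n)" and pb: "0 < pochhammer b (Suc n)"
    using a b by (simp_all add: poch_pos)
  have ea: "real (Suc k) + 2/3 = a + 1" by (simp add: a_def)
  have eb: "real (Suc k) + 4/3 = b + 1" by (simp add: b_def)
  have "F2 n (Suc k) = C2 n / (pochhammer (a+1) (Suc n) * pochhammer (b+1) (Suc n))"
    unfolding F2_def ea eb ..
  also have "\<dots> = C2 n / (pochhammer a (Suc n) * (a + real (Suc n)) / a * (pochhammer b (Suc n) * (b + real (Suc n)) / b))"
    using a b by (simp add: pU)
  also have "\<dots> = (a / (a + real (Suc n))) * (b / (b + real (Suc n))) * (C2 n / (pochhammer a (Suc n) * pochhammer b (Suc n)))"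
    using a b pa pb by (simp add: field_simps)
  also have "\<dots> = sig2 n k * F2 n k"
    unfolding sig2_def F2_def a_def b_def by (simp add: algebra_simps)
  finally show ?thesis .
qed

lemma F2_rho: "F2 (Suc n) k = rho2 n k * F2 n k"
proof -
  define a where "a = real k + 2/3"
  define b where "b = real k + 4/3"
  have a: "0 < a" and b: "0 < b" by (simp_all add: a_def b_def add_pos_nonneg)
  have pa: "0 < pochhammer a (Suc n)" and pb: "0 < pochhammer b (Suc n)"
    using a b by (simp_all add: poch_pos)
  have "F2 (Suc n) k = C2 (Suc n) / (pochhammer a (Suc (Suc n)) * pochhammer b (Suc (Suc n)))"
    unfolding F2_def a_def b_def ..
  also have "\<dots> = C2 (Suc n) / (pochhammer a (Suc n) * (a + real (Suc n)) * (pochhammer b (Suc n) * (b + real (Suc n))))"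
    by (simp add: pS[of a "Suc n"] pS[of b "Suc n"])
  also have "\<dots> = C2 (Suc n) / ((a + real (Suc n)) * (b + real (Suc n))) * (1 / (pochhammer a (Suc n) * pochhammer b (Suc n)))"
    using a b pa pb by (simp add: field_simps)
  also have "\<dots> = rho2 n k * F2 n k"
    unfolding rho2_def F2_def C2_Suc a_def b_def by (simp add: field_simps)
  finally show ?thesis .
qed

lemma rat2: "rho2 n k - 1 = R2 n (Suc k) * sig2 n k - R2 n k"
proof -
  define m where "m = real n"
  have m: "0 \<le> m" by (simp add: m_def)
  define x where "x = real k"
  have x: "0 \<le> x" by (simp add: x_def)
  define d1 where "d1 = m + 1/2"
  define d2 where "d2 = x + m + 5/3"
  define d3 where "d3 = x + m + 7/3"
  define d4 where "d4 = 2*m + 1"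
  have nz: "d1 \<noteq> 0" "d2 \<noteq> 0" "d3 \<noteq> 0" "d4 \<noteq> 0"
    unfolding d1_def d2_def d3_def d4_def using m x by (auto simp: add_nonneg_eq_0_iff)
  have "rho2 n k - 1 - (R2 n (Suc k) * sig2 n k - R2 n k) = (((m + 1) * (m + 5/3) * (m + 1/3) / (4 * d1) * (1 / (d2 * d3)))) - ((1)) - (((2*(1 + x) + 3*m + 3) / (2 * d4)) * ((x + 2/3) / d2 * ((x + 4/3) / d3))) + (((2*x + 3*m + 3) / (2 * d4)))"
    unfolding rho2_def R2_def sig2_def m_def x_def d1_def d2_def d3_def d4_def by simp
  also have "\<dots> = 0"
    apply (simp add: field_simps nz)
    apply (unfold d1_def d2_def d3_def d4_def)
    apply algebra
    done
  finally show ?thesis by simp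
qed

lemma F2_0: "F2 0 k = fS k"
  by (simp add: F2_def C2_def fS_def field_simps)

definition B2 :: "nat \<Rightarrow> real" where
  "B2 n = 9 * (2/3) * (4/3) * \<bar>F2 n 0\<bar>"

lemma F2_bound: "\<bar>F2 n k\<bar> \<le> B2 n * fS k"
proof -
  have "\<bar>C2 n / (pochhammer (real k + 2/3) (Suc n) * pochhammer (real k + 4/3) (Suc n))\<bar>
     \<le> (9 * (2/3) * (4/3) * \<bar>C2 n / (pochhammer (2/3) (Suc n) * pochhammer (4/3) (Suc n))\<bar>)
        * (1 / ((3 * real k + 2) * (3 * real k + 4)))"
  proof (rule bound_gen)
    show "0 < pochhammer (2/3::real) (Suc n)" by (rule poch_pos) simp
    show "0 < pochhammer (4/3::real) (Suc n)" by (rule poch_pos) simp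
    show "(real k + 2/3) / (2/3) * pochhammer (2/3) (Suc n) \<le> pochhammer (real k + 2/3) (Suc n)"
      by (rule poch_lower) simp_all
    show "(real k + 4/3) / (4/3) * pochhammer (4/3) (Suc n) \<le> pochhammer (real k + 4/3) (Suc n)"
      by (rule poch_lower) simp_all
  qed simp_all
  then show ?thesis unfolding B2_def F2_def fS_def by simp
qed

lemma B2_lim: "B2 \<longlonglongrightarrow> 0"
proof (rule ratio_lim0)
  show "B2 (Suc n) = \<bar>rho2 n 0\<bar> * B2 n" for n
    unfolding B2_def F2_rho by (simp add: abs_mult)
  show "0 \<le> B2 n" for n by (simp add: B2_def)
  show "(\<lambda>n. \<bar>rho2 n 0\<bar>) \<longlonglongrightarrow> 1/4"
    unfolding rho2_def by simp real_asymp
qed simp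

lemma R2_lim: "(\<lambda>k. R2 n k * fS k) \<longlonglongrightarrow> 0"
  unfolding R2_def fS_def by real_asymp

lemma S2_sums: "(\<lambda>n. R2 n 0 * F2 n 0) sums (1/2 - sqrt 3 * pi / 18)"
  by (rule master[OF F2_0 F2_rho F2_sig rat2 F2_bound B2_lim R2_lim])

definition T2 :: "nat \<Rightarrow> real" where
  "T2 n = 1 / ((3 * real n + 1) * (3 * real n + 4) * real ((2*n+2) choose (n+1)))"

lemma binom2: "real ((2*Suc n+2) choose (Suc n+1)) = real ((2*n+2) choose (n+1)) * (2 * (2 * real n + 3) / (real n + 2))"
proof -
  have e1: "real ((2*Suc n+2) choose (Suc n+1)) = fact (2*n+4) / (fact (n+2) * fact (n+2))"
    using binomial_fact[of "Suc n+1" "2*Suc n+2", where 'a=real] by (simp add: numeral_eq_Suc)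
  have e2: "real ((2*n+2) choose (n+1)) = fact (2*n+2) / (fact (n+1) * fact (n+1))"
    using binomial_fact[of "n+1" "2*n+2", where 'a=real] by (simp add: numeral_eq_Suc)
  have f1: "(fact (2*n+4) :: real) = fact (2*n+2) * (2*real n+3) * (2*real n+4)"
    by (simp add: numeral_eq_Suc algebra_simps)
  have f2: "(fact (n+2) :: real) = fact (n+1) * (real n+2)"
    by (simp add: numeral_eq_Suc algebra_simps)
  define FA where "FA = (fact (2*n+2) :: real)"
  define FB where "FB = (fact (n+1) :: real)"
  define t where "t = real n + 2"
  have nz: "FB \<noteq> 0" "t \<noteq> 0" unfolding FB_def t_def by simp_all
  have "real ((2*Suc n+2) choose (Suc n+1)) = FA * (2*real n+3) * (2*t) / ((FB * t) * (FB * t))"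
    unfolding e1 f1 f2 FA_def FB_def t_def by simp
  also have "\<dots> = FA / (FB * FB) * (2 * (2 * real n + 3) / t)"
    using nz by (simp add: field_simps)
  also have "\<dots> = real ((2*n+2) choose (n+1)) * (2 * (2 * real n + 3) / (real n + 2))"
    unfolding e2 FA_def FB_def t_def ..
  finally show ?thesis .
qed

lemma T2_Suc: "T2 (Suc n) = T2 n * q2 n"
proof -
  define m where "m = real n"
  have m: "0 \<le> m" by (simp add: m_def)
  define W where "W k = 1 / real ((2*k+2) choose (k+1))" for k
  define r where "r = (m + 2) / (2 * (2 * m + 3))"
  have W: "W (Suc n) = W n * r"
  proof -
    define BB where "BB = real ((2*n+2) choose (n+1))"
    have pos: "0 < (2*n+2) choose (n+1)" by (rule zero_less_binomial) simp
    have nz: "BB \<noteq> 0" unfolding BB_def using pos by (metis of_nat_0_less_iff less_irrefl)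
    have nz2: "2 * m + 3 \<noteq> 0" "m + 2 \<noteq> 0" using m by auto
    have "W (Suc n) = 1 / (BB * (2 * (2 * m + 3) / (m + 2)))"
      unfolding W_def binom2 BB_def m_def ..
    also have "\<dots> = (1 / BB) * r" using nz nz2 by (simp add: r_def field_simps)
    also have "\<dots> = W n * r" unfolding W_def BB_def ..
    finally show ?thesis .
  qed
  define U0 where "U0 = 1 / ((3 * m + 1) * (3 * m + 4))"
  define U1 where "U1 = 1 / ((3 * (m+1) + 1) * (3 * (m+1) + 4))"
  have U0: "U0 \<noteq> 0" unfolding U0_def using m by (auto simp: add_nonneg_eq_0_iff)
  have T2n: "T2 n = U0 * W n" unfolding T2_def U0_def W_def m_def by simp
  have T2s: "T2 (Suc n) = U1 * W (Suc n)" unfolding T2_def U1_def W_def m_def by (simp add: add.commute)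
  have q: "q2 n = U1 / U0 * r" unfolding q2_def U0_def U1_def r_def m_def ..
  show ?thesis unfolding T2n T2s q W using U0 by (simp add: field_simps)
qed

lemma R2_rho_q: "R2 (Suc n) 0 * rho2 n 0 = R2 n 0 * q2 n"
proof -
  define m where "m = real n"
  have m: "0 \<le> m" by (simp add: m_def)
  define d1 where "d1 = 2*(1 + m) + 1"
  define d2 where "d2 = m + 1/2"
  define d3 where "d3 = 0 + m + 5/3"
  define d4 where "d4 = 0 + m + 7/3"
  define d5 where "d5 = 2*m + 1"
  define d6 where "d6 = 3*(m+1)+1"
  define d7 where "d7 = 3*(m+1)+4"
  define d8 where "d8 = 3*m+1"
  define d9 where "d9 = 3*m+4"
  define d10 where "d10 = 2*m + 3"
  have nz: "d1 \<noteq> 0" "d2 \<noteq> 0" "d3 \<noteq> 0" "d4 \<noteq> 0" "d5 \<noteq> 0" "d6 \<noteq> 0" "d7 \<noteq> 0" "d8 \<noteq> 0" "d9 \<noteq> 0" "d10 \<noteq> 0"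
    unfolding d1_def d2_def d3_def d4_def d5_def d6_def d7_def d8_def d9_def d10_def using m by (auto simp: add_nonneg_eq_0_iff)
  have "R2 (Suc n) 0 * rho2 n 0 - (R2 n 0 * q2 n) = (((2*0 + 3*(1 + m) + 3) / (2 * d1)) * ((m + 1) * (m + 5/3) * (m + 1/3) / (4 * d2) * (1 / (d3 * d4)))) - (((2*0 + 3*m + 3) / (2 * d5)) * ((1 / (d6 * d7)) / (1 / (d8 * d9)) * ((m + 2) / (2 * d10))))"
    unfolding R2_def rho2_def q2_def m_def d1_def d2_def d3_def d4_def d5_def d6_def d7_def d8_def d9_def d10_def by simp
  also have "\<dots> = 0"
    apply (simp add: field_simps nz)
    apply (unfold d1_def d2_def d3_def d4_def d5_def d6_def d7_def d8_def d9_def d10_def)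
    apply algebra
    done
  finally show ?thesis by simp
qed

lemma T2_eq: "T2 n = 2/3 * (R2 n 0 * F2 n 0)"
proof (induction n)
  case 0
  show ?case by (simp add: T2_def R2_def F2_def C2_def)
next
  case (Suc n)
  have "T2 (Suc n) = 2/3 * (R2 n 0 * F2 n 0) * q2 n" using Suc T2_Suc by simp
  also have "\<dots> = 2/3 * (R2 (Suc n) 0 * F2 (Suc n) 0)"
    using R2_rho_q[of n] by (simp add: F2_rho)
  finally show ?case .
qed

lemma series2: "(\<lambda>n. T2 n) sums (2/3 * (1/2 - sqrt 3 * pi / 18))"
  unfolding T2_eq by (rule sums_mult[OF S2_sums])

definition sig3 :: "nat \<Rightarrow> nat \<Rightarrow> real" where
  "sig3 n k = (real k + real n + 2/3) / (real k + 2*real n + 5/3) * ((real k + real n + 4/3) / (real k + real n + 7/3))"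
definition rho3 :: "nat \<Rightarrow> nat \<Rightarrow> real" where
  "rho3 n k = (real n + 1/3) * ((real k + real n + 2/3) / ((real k + 2*real n + 5/3) * (real k + 2*real n + 8/3))) * ((real k + real n + 4/3) / (real k + real n + 7/3))"
definition R3 :: "nat \<Rightarrow> nat \<Rightarrow> real" where
  "R3 n k = (3*real n^2 + 3*real n*real k + real k^2 + 17/3*real n + 3*real k + 23/9) / ((real k + 2*real n + 5/3) * (real n + 1))"
definition q3 :: "nat \<Rightarrow> real" where
  "q3 n = ((27*(real n+1)^2 + 51*(real n+1) + 23) / ((3*(real n+1)+1) * (3*(real n+1)+4) * ((real n+1)+1))) / ((27*real n^2 + 51*real n + 23) / ((3*real n+1) * (3*real n+4) * (real n+1))) * ((real n + 2/3) / (real n + 11/6)) * (1/4)"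
definition C3 :: "nat \<Rightarrow> real" where
  "C3 n = pochhammer (1/3) n / 9"
definition F3 :: "nat \<Rightarrow> nat \<Rightarrow> real" where
  "F3 n k = C3 n / (pochhammer (real k + (real n + 2/3)) (Suc n) * (real k + (real n + 4/3)))"

lemma C3_Suc: "C3 (Suc n) = C3 n * (real n + 1/3)"
  unfolding C3_def pS by (simp add: add.commute)

lemma F3_sig: "F3 n (Suc k) = sig3 n k * F3 n k"
proof -
  define a where "a = real k + (real n + 2/3)"
  define b where "b = real k + (real n + 4/3)"
  have a: "0 < a" and b: "0 < b" by (simp_all add: a_def b_def add_pos_nonneg)
  have pa: "0 < pochhammer a (Suc n)" using a by (simp add: poch_pos)
  have ea: "real (Suc k) + (real n + 2/3) = a + 1" by (simp add: a_def)
  have eb: "real (Suc k) + (real n + 4/3) = b + 1" by (simp add: b_def)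
  have "F3 n (Suc k) = C3 n / (pochhammer (a+1) (Suc n) * (b+1))"
    unfolding F3_def ea eb ..
  also have "\<dots> = C3 n / (pochhammer a (Suc n) * (a + real (Suc n)) / a * (b + 1))"
    using a by (simp add: pU)
  also have "\<dots> = (a / (a + real (Suc n))) * (b / (b + 1)) * (C3 n / (pochhammer a (Suc n) * b))"
    using a b pa by (simp add: field_simps)
  also have "\<dots> = sig3 n k * F3 n k"
    unfolding sig3_def F3_def a_def b_def by (simp add: algebra_simps)
  finally show ?thesis .
qed

lemma F3_rho: "F3 (Suc n) k = rho3 n k * F3 n k"
proof -
  define a where "a = real k + (real n + 2/3)"
  define b where "b = real k + (real n + 4/3)"
  have a: "0 < a" and b: "0 < b" by (simp_all add: a_def b_def add_pos_nonneg)
  have pa: "0 < pochhammer a (Suc n)" using a by (simp add: poch_pos)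
  have ea: "real k + (real (Suc n) + 2/3) = a + 1" by (simp add: a_def)
  have eb: "real k + (real (Suc n) + 4/3) = b + 1" by (simp add: b_def)
  have "F3 (Suc n) k = C3 (Suc n) / (pochhammer (a+1) (Suc (Suc n)) * (b+1))"
    unfolding F3_def ea eb ..
  also have "\<dots> = C3 (Suc n) / (pochhammer a (Suc n) * (a + real (Suc n)) * (a + real (Suc (Suc n))) / a * (b+1))"
    using a by (simp add: pU pS[of a "Suc n"])
  also have "\<dots> = C3 (Suc n) * a * b / ((a + real (Suc n)) * (a + real (Suc (Suc n))) * (b+1)) * (1 / (pochhammer a (Suc n) * b))"
    using a b pa by (simp add: field_simps)
  also have "\<dots> = rho3 n k * F3 n k"
    unfolding rho3_def F3_def C3_Suc a_def b_def by (simp add: field_simps)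
  finally show ?thesis .
qed

lemma rat3: "rho3 n k - 1 = R3 n (Suc k) * sig3 n k - R3 n k"
proof -
  define m where "m = real n"
  have m: "0 \<le> m" by (simp add: m_def)
  define x where "x = real k"
  have x: "0 \<le> x" by (simp add: x_def)
  define d1 where "d1 = x + 2*m + 5/3"
  define d2 where "d2 = x + 2*m + 8/3"
  define d3 where "d3 = x + m + 7/3"
  define d4 where "d4 = (1 + x) + 2*m + 5/3"
  define d5 where "d5 = m + 1"
  have nz: "d1 \<noteq> 0" "d2 \<noteq> 0" "d3 \<noteq> 0" "d4 \<noteq> 0" "d5 \<noteq> 0"
    unfolding d1_def d2_def d3_def d4_def d5_def using m x by (auto simp: add_nonneg_eq_0_iff)
  have "rho3 n k - 1 - (R3 n (Suc k) * sig3 n k - R3 n k) = (((m + 1/3) * ((x + m + 2/3) / (d1 * d2)) * ((x + m + 4/3) / d3))) - ((1)) - (((3*m^2 + 3*m*(1 + x) + (1 + x)^2 + 17/3*m + 3*(1 + x) + 23/9) / (d4 * d5)) * ((x + m + 2/3) / d1 * ((x + m + 4/3) / d3))) + (((3*m^2 + 3*m*x + x^2 + 17/3*m + 3*x + 23/9) / (d1 * d5)))"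
    unfolding rho3_def R3_def sig3_def m_def x_def d1_def d2_def d3_def d4_def d5_def by simp
  also have "\<dots> = 0"
    apply (simp add: field_simps nz)
    apply (unfold d1_def d2_def d3_def d4_def d5_def)
    apply algebra
    done
  finally show ?thesis by simp
qed

lemma F3_0: "F3 0 k = fS k"
  by (simp add: F3_def C3_def fS_def field_simps)

definition B3 :: "nat \<Rightarrow> real" where
  "B3 n = 9 * (real n + 2/3) * (real n + 4/3) * \<bar>F3 n 0\<bar>"

lemma F3_bound: "\<bar>F3 n k\<bar> \<le> B3 n * fS k"
proof -
  have "\<bar>C3 n / (pochhammer (real k + (real n + 2/3)) (Suc n) * (real k + (real n + 4/3)))\<bar>
     \<le> (9 * (real n + 2/3) * (real n + 4/3) * \<bar>C3 n / (pochhammer (real n + 2/3) (Suc n) * (real n + 4/3))\<bar>)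
        * (1 / ((3 * real k + 2) * (3 * real k + 4)))"
  proof (rule bound_gen)
    show "0 < pochhammer (real n + 2/3) (Suc n)" by (rule poch_pos) (simp add: add_pos_nonneg)
    show "(real k + (real n + 2/3)) / (real n + 2/3) * pochhammer (real n + 2/3) (Suc n)
          \<le> pochhammer (real k + (real n + 2/3)) (Suc n)"
      by (rule poch_lower) (simp_all add: add_pos_nonneg)
    have "real n + 4/3 \<noteq> 0" by (simp add: add_nonneg_eq_0_iff)
    then show "(real k + (real n + 4/3)) / (real n + 4/3) * (real n + 4/3) \<le> real k + (real n + 4/3)"
      by simp
  qed (simp_all add: add_pos_nonneg)
  then show ?thesis unfolding B3_def F3_def fS_def by simp
qed

lemma B3_lim: "B3 \<longlonglongrightarrow> 0"
proof (rule ratio_lim0)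
  show "B3 (Suc n) = ((real n + 5/3) * (real n + 7/3) / ((real n + 2/3) * (real n + 4/3)) * \<bar>rho3 n 0\<bar>) * B3 n" for n
  proof -
    define p where "p = real n + 2/3"
    define q where "q = real n + 4/3"
    have pq: "p \<noteq> 0" "q \<noteq> 0" unfolding p_def q_def by (simp_all add: add_nonneg_eq_0_iff)
    have "B3 (Suc n) = 9 * (p + 1) * (q + 1) * (\<bar>rho3 n 0\<bar> * \<bar>F3 n 0\<bar>)"
      unfolding B3_def F3_rho p_def q_def by (simp add: abs_mult algebra_simps)
    also have "\<dots> = ((p + 1) * (q + 1) / (p * q) * \<bar>rho3 n 0\<bar>) * (9 * p * q * \<bar>F3 n 0\<bar>)"
      using pq by (simp add: field_simps)
    also have "\<dots> = ((real n + 5/3) * (real n + 7/3) / ((real n + 2/3) * (real n + 4/3)) * \<bar>rho3 n 0\<bar>) * B3 n"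
      unfolding B3_def p_def q_def by (simp add: algebra_simps)
    finally show ?thesis .
  qed
  show "0 \<le> B3 n" for n by (simp add: B3_def)
  show "(\<lambda>n. (real n + 5/3) * (real n + 7/3) / ((real n + 2/3) * (real n + 4/3)) * \<bar>rho3 n 0\<bar>) \<longlonglongrightarrow> 1/4"
    unfolding rho3_def by simp real_asymp
qed simp

lemma R3_lim: "(\<lambda>k. R3 n k * fS k) \<longlonglongrightarrow> 0"
  unfolding R3_def fS_def by real_asymp

lemma S3_sums: "(\<lambda>n. R3 n 0 * F3 n 0) sums (1/2 - sqrt 3 * pi / 18)"
  by (rule master[OF F3_0 F3_rho F3_sig rat3 F3_bound B3_lim R3_lim])

definition T3 :: "nat \<Rightarrow> real" where
  "T3 n = (27 * real n ^ 2 + 51 * real n + 23) * pochhammer (2/3) n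
           / ((3 * real n + 1) * (3 * real n + 4) * (real n + 1) * pochhammer (11/6) n)
           * (1 / 4 ^ n)"

lemma T3_Suc: "T3 (Suc n) = T3 n * q3 n"
proof -
  define m where "m = real n"
  have m: "0 \<le> m" by (simp add: m_def)
  define W where "W k = pochhammer (2/3) k / pochhammer (11/6::real) k" for k
  define r where "r = (m + 2/3) / (m + 11/6)"
  have W: "W (Suc n) = W n * r"
  proof -
    have nz: "pochhammer (11/6::real) n \<noteq> 0" using poch_pos[of "11/6" n] by auto
    have nz2: "m + 11/6 \<noteq> 0" using m by auto
    show ?thesis unfolding W_def r_def pS m_def using nz nz2[unfolded m_def]
      by (simp add: field_simps)
  qed
  define U0 where "U0 = (27 * m ^ 2 + 51 * m + 23) / ((3 * m + 1) * (3 * m + 4) * (m + 1))"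
  define U1 where "U1 = (27 * (m+1) ^ 2 + 51 * (m+1) + 23) / ((3 * (m+1) + 1) * (3 * (m+1) + 4) * ((m+1) + 1))"
  have U0: "U0 \<noteq> 0" unfolding U0_def using m by (auto simp: add_nonneg_eq_0_iff)
  have T3n: "T3 n = U0 * W n * (1 / 4 ^ n)" unfolding T3_def U0_def W_def m_def by simp
  have T3s: "T3 (Suc n) = U1 * W (Suc n) * (1 / 4 ^ Suc n)" unfolding T3_def U1_def W_def m_def by (simp add: add.commute)
  have q: "q3 n = U1 / U0 * r * (1/4)" unfolding q3_def U0_def U1_def r_def m_def ..
  show ?thesis unfolding T3n T3s q W using U0 by (simp add: field_simps)
qed

lemma R3_rho_q: "R3 (Suc n) 0 * rho3 n 0 = R3 n 0 * q3 n"
proof -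
  define m where "m = real n"
  have m: "0 \<le> m" by (simp add: m_def)
  define d1 where "d1 = 0 + 2*(1 + m) + 5/3"
  define d2 where "d2 = (1 + m) + 1"
  define d3 where "d3 = 0 + 2*m + 5/3"
  define d4 where "d4 = 0 + 2*m + 8/3"
  define d5 where "d5 = 0 + m + 7/3"
  define d6 where "d6 = m + 1"
  define d7 where "d7 = 3*(m+1)+1"
  define d8 where "d8 = 3*(m+1)+4"
  define d9 where "d9 = (m+1)+1"
  define d10 where "d10 = 27*m^2 + 51*m + 23"
  define d11 where "d11 = 3*m+1"
  define d12 where "d12 = 3*m+4"
  define d13 where "d13 = m+1"
  define d14 where "d14 = m + 11/6"
  have nz: "d1 \<noteq> 0" "d2 \<noteq> 0" "d3 \<noteq> 0" "d4 \<noteq> 0" "d5 \<noteq> 0" "d6 \<noteq> 0" "d7 \<noteq> 0" "d8 \<noteq> 0" "d9 \<noteq> 0" "d10 \<noteq> 0" "d11 \<noteq> 0" "d12 \<noteq> 0" "d13 \<noteq> 0" "d14 \<noteq> 0"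
    unfolding d1_def d2_def d3_def d4_def d5_def d6_def d7_def d8_def d9_def d10_def d11_def d12_def d13_def d14_def using m by (auto simp: add_nonneg_eq_0_iff)
  have "R3 (Suc n) 0 * rho3 n 0 - (R3 n 0 * q3 n) = (((3*(1 + m)^2 + 3*(1 + m)*0 + 0^2 + 17/3*(1 + m) + 3*0 + 23/9) / (d1 * d2)) * ((m + 1/3) * ((0 + m + 2/3) / (d3 * d4)) * ((0 + m + 4/3) / d5))) - (((3*m^2 + 3*m*0 + 0^2 + 17/3*m + 3*0 + 23/9) / (d3 * d6)) * (((27*(m+1)^2 + 51*(m+1) + 23) / (d7 * d8 * d9)) / (d10 / (d11 * d12 * d13)) * ((m + 2/3) / d14) * (1/4)))"
    unfolding R3_def rho3_def q3_def m_def d1_def d2_def d3_def d4_def d5_def d6_def d7_def d8_def d9_def d10_def d11_def d12_def d13_def d14_def by simp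
  also have "\<dots> = 0"
    apply (simp add: field_simps nz)
    apply (unfold d1_def d2_def d3_def d4_def d5_def d6_def d7_def d8_def d9_def d10_def d11_def d12_def d13_def d14_def)
    apply algebra
    done
  finally show ?thesis by simp
qed

lemma R3_nz: "R3 n 0 \<noteq> 0"
  unfolding R3_def by (simp add: add_nonneg_eq_0_iff)

lemma T3_eq: "T3 n = 30 * (R3 n 0 * F3 n 0)"
proof (induction n)
  case 0
  show ?case by (simp add: T3_def R3_def F3_def C3_def)
next
  case (Suc n)
  have "T3 (Suc n) = 30 * (R3 n 0 * F3 n 0) * q3 n" using Suc T3_Suc by simp
  also have "\<dots> = 30 * (R3 (Suc n) 0 * F3 (Suc n) 0)"
    using R3_rho_q[of n] by (simp add: F3_rho)
  finally show ?case .
qed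

lemma series3: "(\<lambda>n. T3 n) sums (30 * (1/2 - sqrt 3 * pi / 18))"
  unfolding T3_eq by (rule sums_mult[OF S3_sums])

definition sig4 :: "nat \<Rightarrow> nat \<Rightarrow> real" where
  "sig4 n k = (real k + real n + 2/3) / (real k + 2*real n + 5/3) * ((real k + real n + 4/3) / (real k + 2*real n + 7/3))"
definition rho4 :: "nat \<Rightarrow> nat \<Rightarrow> real" where
  "rho4 n k = (real n + 1) * (real n + 5/3) * (real n + 1/3) / (4 * (real n + 1/2)) * ((real k + real n + 2/3) / ((real k + 2*real n + 5/3) * (real k + 2*real n + 8/3))) * ((real k + real n + 4/3) / ((real k + 2*real n + 7/3) * (real k + 2*real n + 10/3)))"
definition R4 :: "nat \<Rightarrow> nat \<Rightarrow> real" where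
  "R4 n k = (55/9 + 89/9*real k + 11/2*real k^2 + real k^3 + 23*real n + 24*real n*real k + 13/2*real n*real k^2 + 55/2*real n^2 + 14*real n^2*real k + 21/2*real n^3) / ((real k + 2*real n + 5/3) * (real k + 2*real n + 7/3) * (2*real n + 1))"
definition q4 :: "nat \<Rightarrow> real" where
  "q4 n = ((189*(real n+1)^3 + 495*(real n+1)^2 + 414*(real n+1) + 110) / ((6*(real n+1)+1) * (6*(real n+1)+7) * (6*(real n+1)+5) * (2*(real n+1)+1))) / ((189*real n^3 + 495*real n^2 + 414*real n + 110) / ((6*real n+1) * (6*real n+7) * (6*real n+5) * (2*real n+1))) * (((3*real n+1)*(3*real n+2)*(3*real n+3))^2 / ((6*real n+1) * (6*real n+2) * (6*real n+3) * (6*real n+4) * (6*real n+5) * (6*real n+6)))"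
definition C4 :: "nat \<Rightarrow> real" where
  "C4 n = pochhammer 1 n * pochhammer (5/3) n * pochhammer (1/3) n / (9 * pochhammer (1/2) n * 4 ^ n)"
definition F4 :: "nat \<Rightarrow> nat \<Rightarrow> real" where
  "F4 n k = C4 n / (pochhammer (real k + (real n + 2/3)) (Suc n) * pochhammer (real k + (real n + 4/3)) (Suc n))"

lemma C4_Suc: "C4 (Suc n) = C4 n * ((real n + 1) * (real n + 5/3) * (real n + 1/3) / (4 * (real n + 1/2)))"
proof -
  define P1 where "P1 = pochhammer (1::real) n"
  define P2 where "P2 = pochhammer (5/3::real) n"
  define P3 where "P3 = pochhammer (1/3::real) n"
  define P4 where "P4 = pochhammer (1/2::real) n"
  define s where "s = ((4::real)^n)"
  have p: "P4 \<noteq> 0" unfolding P4_def using poch_pos[of "1/2" n] by simp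
  have s: "s \<noteq> 0" unfolding s_def by simp
  have q: "real n + 1/2 \<noteq> 0" "1/2 + real n \<noteq> 0" "1 + 2 * real n \<noteq> 0" "1 + real n * 2 \<noteq> 0"
    by (simp_all add: add_nonneg_eq_0_iff)
  have "C4 (Suc n) = (P1 * (1 + real n)) * (P2 * (5/3 + real n)) * (P3 * (1/3 + real n)) / (9 * (P4 * (1/2 + real n)) * (4 * s))"
    unfolding C4_def pS P1_def P2_def P3_def P4_def s_def by (simp add: add.commute)
  also have "\<dots> = (P1 * P2 * P3 / (9 * P4 * s)) * ((real n + 1) * (real n + 5/3) * (real n + 1/3) / (4 * (real n + 1/2)))"
    using p q s by (simp add: field_simps)
  also have "\<dots> = C4 n * ((real n + 1) * (real n + 5/3) * (real n + 1/3) / (4 * (real n + 1/2)))"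
    unfolding C4_def P1_def P2_def P3_def P4_def s_def by simp
  finally show ?thesis .
qed

lemma F4_sig: "F4 n (Suc k) = sig4 n k * F4 n k"
proof -
  define a where "a = real k + (real n + 2/3)"
  define b where "b = real k + (real n + 4/3)"
  have a: "0 < a" and b: "0 < b" by (simp_all add: a_def b_def add_pos_nonneg)
  have pa: "0 < pochhammer a (Suc n)" and pb: "0 < pochhammer b (Suc n)"
    using a b by (simp_all add: poch_pos)
  have ea: "real (Suc k) + (real n + 2/3) = a + 1" by (simp add: a_def)
  have eb: "real (Suc k) + (real n + 4/3) = b + 1" by (simp add: b_def)
  have "F4 n (Suc k) = C4 n / (pochhammer (a+1) (Suc n) * pochhammer (b+1) (Suc n))"
    unfolding F4_def ea eb ..
  also have "\<dots> = C4 n / (pochhammer a (Suc n) * (a + real (Suc n)) / a * (pochhammer b (Suc n) * (b + real (Suc n)) / b))"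
    using a b by (simp add: pU)
  also have "\<dots> = (a / (a + real (Suc n))) * (b / (b + real (Suc n))) * (C4 n / (pochhammer a (Suc n) * pochhammer b (Suc n)))"
    using a b pa pb by (simp add: field_simps)
  also have "\<dots> = sig4 n k * F4 n k"
    unfolding sig4_def F4_def a_def b_def by (simp add: algebra_simps)
  finally show ?thesis .
qed

lemma F4_rho: "F4 (Suc n) k = rho4 n k * F4 n k"
proof -
  define a where "a = real k + (real n + 2/3)"
  define b where "b = real k + (real n + 4/3)"
  have a: "0 < a" and b: "0 < b" by (simp_all add: a_def b_def add_pos_nonneg)
  have pa: "0 < pochhammer a (Suc n)" and pb: "0 < pochhammer b (Suc n)"
    using a b by (simp_all add: poch_pos)
  have ea: "real k + (real (Suc n) + 2/3) = a + 1" by (simp add: a_def)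
  have eb: "real k + (real (Suc n) + 4/3) = b + 1" by (simp add: b_def)
  have "F4 (Suc n) k = C4 (Suc n) / (pochhammer (a+1) (Suc (Suc n)) * pochhammer (b+1) (Suc (Suc n)))"
    unfolding F4_def ea eb ..
  also have "\<dots> = C4 (Suc n) / (pochhammer a (Suc n) * (a + real (Suc n)) * (a + real (Suc (Suc n))) / a * (pochhammer b (Suc n) * (b + real (Suc n)) * (b + real (Suc (Suc n))) / b))"
    using a b by (simp add: pU pS[of a "Suc n"] pS[of b "Suc n"])
  also have "\<dots> = C4 (Suc n) * a * b / ((a + real (Suc n)) * (a + real (Suc (Suc n))) * ((b + real (Suc n)) * (b + real (Suc (Suc n))))) * (1 / (pochhammer a (Suc n) * pochhammer b (Suc n)))"
    using a b pa pb by (simp add: field_simps)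
  also have "\<dots> = rho4 n k * F4 n k"
    unfolding rho4_def F4_def C4_Suc a_def b_def by (simp add: field_simps)
  finally show ?thesis .
qed

lemma rat4: "rho4 n k - 1 = R4 n (Suc k) * sig4 n k - R4 n k"
proof -
  define m where "m = real n"
  have m: "0 \<le> m" by (simp add: m_def)
  define x where "x = real k"
  have x: "0 \<le> x" by (simp add: x_def)
  define d1 where "d1 = m + 1/2"
  define d2 where "d2 = x + 2*m + 5/3"
  define d3 where "d3 = x + 2*m + 8/3"
  define d4 where "d4 = x + 2*m + 7/3"
  define d5 where "d5 = x + 2*m + 10/3"
  define d6 where "d6 = (1 + x) + 2*m + 5/3"
  define d7 where "d7 = (1 + x) + 2*m + 7/3"
  define d8 where "d8 = 2*m + 1"
  have nz: "d1 \<noteq> 0" "d2 \<noteq> 0" "d3 \<noteq> 0" "d4 \<noteq> 0" "d5 \<noteq> 0" "d6 \<noteq> 0" "d7 \<noteq> 0" "d8 \<noteq> 0"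
    unfolding d1_def d2_def d3_def d4_def d5_def d6_def d7_def d8_def using m x by (auto simp: add_nonneg_eq_0_iff)
  have "rho4 n k - 1 - (R4 n (Suc k) * sig4 n k - R4 n k) = (((m + 1) * (m + 5/3) * (m + 1/3) / (4 * d1) * ((x + m + 2/3) / (d2 * d3)) * ((x + m + 4/3) / (d4 * d5)))) - ((1)) - (((55/9 + 89/9*(1 + x) + 11/2*(1 + x)^2 + (1 + x)^3 + 23*m + 24*m*(1 + x) + 13/2*m*(1 + x)^2 + 55/2*m^2 + 14*m^2*(1 + x) + 21/2*m^3) / (d6 * d7 * d8)) * ((x + m + 2/3) / d2 * ((x + m + 4/3) / d4))) + (((55/9 + 89/9*x + 11/2*x^2 + x^3 + 23*m + 24*m*x + 13/2*m*x^2 + 55/2*m^2 + 14*m^2*x + 21/2*m^3) / (d2 * d4 * d8)))"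
    unfolding rho4_def R4_def sig4_def m_def x_def d1_def d2_def d3_def d4_def d5_def d6_def d7_def d8_def by simp
  also have "\<dots> = 0"
    apply (simp add: field_simps nz)
    apply (unfold d1_def d2_def d3_def d4_def d5_def d6_def d7_def d8_def)
    apply algebra
    done
  finally show ?thesis by simp
qed

lemma F4_0: "F4 0 k = fS k"
  by (simp add: F4_def C4_def fS_def field_simps)

definition B4 :: "nat \<Rightarrow> real" where
  "B4 n = 9 * (real n + 2/3) * (real n + 4/3) * \<bar>F4 n 0\<bar>"

lemma F4_bound: "\<bar>F4 n k\<bar> \<le> B4 n * fS k"
proof -
  have "\<bar>C4 n / (pochhammer (real k + (real n + 2/3)) (Suc n) * pochhammer (real k + (real n + 4/3)) (Suc n))\<bar>
     \<le> (9 * (real n + 2/3) * (real n + 4/3) * \<bar>C4 n / (pochhammer (real n + 2/3) (Suc n) * pochhammer (real n + 4/3) (Suc n))\<bar>)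
        * (1 / ((3 * real k + 2) * (3 * real k + 4)))"
  proof (rule bound_gen)
    show "0 < pochhammer (real n + 2/3) (Suc n)" by (rule poch_pos) (simp add: add_pos_nonneg)
    show "0 < pochhammer (real n + 4/3) (Suc n)" by (rule poch_pos) (simp add: add_pos_nonneg)
    show "(real k + (real n + 2/3)) / (real n + 2/3) * pochhammer (real n + 2/3) (Suc n)
          \<le> pochhammer (real k + (real n + 2/3)) (Suc n)"
      by (rule poch_lower) (simp_all add: add_pos_nonneg)
    show "(real k + (real n + 4/3)) / (real n + 4/3) * pochhammer (real n + 4/3) (Suc n)
          \<le> pochhammer (real k + (real n + 4/3)) (Suc n)"
      by (rule poch_lower) (simp_all add: add_pos_nonneg)
  qed simp_all
  then show ?thesis unfolding B4_def F4_def fS_def by simp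
qed

lemma B4_lim: "B4 \<longlonglongrightarrow> 0"
proof (rule ratio_lim0)
  show "B4 (Suc n) = ((real n + 5/3) * (real n + 7/3) / ((real n + 2/3) * (real n + 4/3)) * \<bar>rho4 n 0\<bar>) * B4 n" for n
  proof -
    define p where "p = real n + 2/3"
    define q where "q = real n + 4/3"
    have pq: "p \<noteq> 0" "q \<noteq> 0" unfolding p_def q_def by (simp_all add: add_nonneg_eq_0_iff)
    have "B4 (Suc n) = 9 * (p + 1) * (q + 1) * (\<bar>rho4 n 0\<bar> * \<bar>F4 n 0\<bar>)"
      unfolding B4_def F4_rho p_def q_def by (simp add: abs_mult algebra_simps)
    also have "\<dots> = ((p + 1) * (q + 1) / (p * q) * \<bar>rho4 n 0\<bar>) * (9 * p * q * \<bar>F4 n 0\<bar>)"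
      using pq by (simp add: field_simps)
    also have "\<dots> = ((real n + 5/3) * (real n + 7/3) / ((real n + 2/3) * (real n + 4/3)) * \<bar>rho4 n 0\<bar>) * B4 n"
      unfolding B4_def p_def q_def by (simp add: algebra_simps)
    finally show ?thesis .
  qed
  show "0 \<le> B4 n" for n by (simp add: B4_def)
  show "(\<lambda>n. (real n + 5/3) * (real n + 7/3) / ((real n + 2/3) * (real n + 4/3)) * \<bar>rho4 n 0\<bar>) \<longlonglongrightarrow> 1/64"
    unfolding rho4_def by simp real_asymp
qed simp

lemma R4_lim: "(\<lambda>k. R4 n k * fS k) \<longlonglongrightarrow> 0"
  unfolding R4_def fS_def by real_asymp

lemma S4_sums: "(\<lambda>n. R4 n 0 * F4 n 0) sums (1/2 - sqrt 3 * pi / 18)"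
  by (rule master[OF F4_0 F4_rho F4_sig rat4 F4_bound B4_lim R4_lim])

definition T4 :: "nat \<Rightarrow> real" where
  "T4 n = (189 * real n ^ 3 + 495 * real n ^ 2 + 414 * real n + 110)
           / ((6 * real n + 1) * (6 * real n + 7) * (6 * real n + 5) * (2 * real n + 1))
           * (1 / real ((6*n) choose (3*n)))"

lemma binom6: "real ((6*Suc n) choose (3*Suc n)) = real ((6*n) choose (3*n)) *
   ((6*real n+1)*(6*real n+2)*(6*real n+3)*(6*real n+4)*(6*real n+5)*(6*real n+6) / ((3*real n+1)*(3*real n+2)*(3*real n+3))^2)"
proof -
  have le1: "3*Suc n \<le> 6*Suc n" by simp
  have eqs: "6*Suc n = 6*n+6" "3*Suc n = 3*n+3" "6*n+6 - (3*n+3) = 3*n+3" by simp_all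
  have e1: "real ((6*Suc n) choose (3*Suc n)) = fact (6*n+6) / (fact (3*n+3) * fact (3*n+3))"
    using binomial_fact[OF le1, where 'a=real] by (simp only: eqs)
  have le2: "3*n \<le> 6*n" by simp
  have e2: "real ((6*n) choose (3*n)) = fact (6*n) / (fact (3*n) * fact (3*n))"
    using binomial_fact[OF le2, where 'a=real] by (simp add: mult_2)
  have s6: "6*n+6 = Suc (Suc (Suc (Suc (Suc (Suc (6*n))))))" by simp
  have s3: "3*n+3 = Suc (Suc (Suc (3*n)))" by simp
  have f1: "(fact (6*n+6) :: real) = fact (6*n) * ((6*real n+1)*(6*real n+2)*(6*real n+3)*(6*real n+4)*(6*real n+5)*(6*real n+6))"
    unfolding s6 fact_Suc by (simp add: algebra_simps)
  have f2: "(fact (3*n+3) :: real) = fact (3*n) * ((3*real n+1)*(3*real n+2)*(3*real n+3))"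
    unfolding s3 fact_Suc by (simp add: algebra_simps)
  define FA where "FA = (fact (6*n) :: real)"
  define FB where "FB = (fact (3*n) :: real)"
  define P6 where "P6 = (6*real n+1)*(6*real n+2)*(6*real n+3)*(6*real n+4)*(6*real n+5)*(6*real n+6)"
  define P3 where "P3 = (3*real n+1)*(3*real n+2)*(3*real n+3)"
  have nz: "FB \<noteq> 0" "P3 \<noteq> 0" unfolding FB_def P3_def by (simp_all add: add_nonneg_eq_0_iff)
  have "real ((6*Suc n) choose (3*Suc n)) = FA * P6 / ((FB * P3) * (FB * P3))"
    unfolding e1 f1 f2 FA_def FB_def P6_def P3_def ..
  also have "\<dots> = FA / (FB * FB) * (P6 / P3^2)"
    using nz by (simp add: field_simps power2_eq_square)
  also have "\<dots> = real ((6*n) choose (3*n)) * ((6*real n+1)*(6*real n+2)*(6*real n+3)*(6*real n+4)*(6*real n+5)*(6*real n+6) / ((3*real n+1)*(3*real n+2)*(3*real n+3))^2)"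
    unfolding e2 FA_def FB_def P6_def P3_def ..
  finally show ?thesis .
qed

lemma T4_Suc: "T4 (Suc n) = T4 n * q4 n"
proof -
  define m where "m = real n"
  have m: "0 \<le> m" by (simp add: m_def)
  define W where "W k = 1 / real ((6*k) choose (3*k))" for k
  define r where "r = ((3*m+1)*(3*m+2)*(3*m+3))^2 / ((6*m+1)*(6*m+2)*(6*m+3)*(6*m+4)*(6*m+5)*(6*m+6))"
  have W: "W (Suc n) = W n * r"
  proof -
    define BB where "BB = real ((6*n) choose (3*n))"
    have pos: "0 < (6*n) choose (3*n)" by (rule zero_less_binomial) simp
    have nz: "BB \<noteq> 0" unfolding BB_def using pos by (metis of_nat_0_less_iff less_irrefl)
    define P6 where "P6 = (6*m+1)*(6*m+2)*(6*m+3)*(6*m+4)*(6*m+5)*(6*m+6)"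
    define P3 where "P3 = ((3*m+1)*(3*m+2)*(3*m+3))^2"
    have nz2: "P6 \<noteq> 0" "P3 \<noteq> 0" unfolding P6_def P3_def using m by (auto simp: add_nonneg_eq_0_iff)
    have "W (Suc n) = 1 / (BB * (P6 / P3))"
      unfolding W_def binom6 BB_def m_def P6_def P3_def ..
    also have "\<dots> = (1 / BB) * (P3 / P6)" using nz nz2 by (simp add: field_simps)
    also have "\<dots> = W n * r" unfolding W_def BB_def r_def P6_def P3_def m_def ..
    finally show ?thesis .
  qed
  define U0 where "U0 = (189 * m ^ 3 + 495 * m ^ 2 + 414 * m + 110) / ((6 * m + 1) * (6 * m + 7) * (6 * m + 5) * (2 * m + 1))"
  define U1 where "U1 = (189 * (m+1) ^ 3 + 495 * (m+1) ^ 2 + 414 * (m+1) + 110) / ((6 * (m+1) + 1) * (6 * (m+1) + 7) * (6 * (m+1) + 5) * (2 * (m+1) + 1))"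
  have U0: "U0 \<noteq> 0" unfolding U0_def using m by (auto simp: add_nonneg_eq_0_iff)
  have T4n: "T4 n = U0 * W n" unfolding T4_def U0_def W_def m_def ..
  have T4s: "T4 (Suc n) = U1 * W (Suc n)" unfolding T4_def U1_def W_def m_def by (simp add: add.commute)
  have q: "q4 n = U1 / U0 * r" unfolding q4_def U0_def U1_def r_def m_def ..
  show ?thesis unfolding T4n T4s q W using U0 by (simp add: field_simps)
qed

lemma R4_rho_q: "R4 (Suc n) 0 * rho4 n 0 = R4 n 0 * q4 n"
proof -
  define m where "m = real n"
  have m: "0 \<le> m" by (simp add: m_def)
  define d1 where "d1 = 0 + 2*(1 + m) + 5/3"
  define d2 where "d2 = 0 + 2*(1 + m) + 7/3"
  define d3 where "d3 = 2*(1 + m) + 1"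
  define d4 where "d4 = m + 1/2"
  define d5 where "d5 = 0 + 2*m + 5/3"
  define d6 where "d6 = 0 + 2*m + 8/3"
  define d7 where "d7 = 0 + 2*m + 7/3"
  define d8 where "d8 = 0 + 2*m + 10/3"
  define d9 where "d9 = 2*m + 1"
  define d10 where "d10 = 6*(m+1)+1"
  define d11 where "d11 = 6*(m+1)+7"
  define d12 where "d12 = 6*(m+1)+5"
  define d13 where "d13 = 2*(m+1)+1"
  define d14 where "d14 = 189*m^3 + 495*m^2 + 414*m + 110"
  define d15 where "d15 = 6*m+1"
  define d16 where "d16 = 6*m+7"
  define d17 where "d17 = 6*m+5"
  define d18 where "d18 = 2*m+1"
  define d19 where "d19 = 6*m+2"
  define d20 where "d20 = 6*m+3"
  define d21 where "d21 = 6*m+4"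
  define d22 where "d22 = 6*m+6"
  have nz: "d1 \<noteq> 0" "d2 \<noteq> 0" "d3 \<noteq> 0" "d4 \<noteq> 0" "d5 \<noteq> 0" "d6 \<noteq> 0" "d7 \<noteq> 0" "d8 \<noteq> 0" "d9 \<noteq> 0" "d10 \<noteq> 0" "d11 \<noteq> 0" "d12 \<noteq> 0" "d13 \<noteq> 0" "d14 \<noteq> 0" "d15 \<noteq> 0" "d16 \<noteq> 0" "d17 \<noteq> 0" "d18 \<noteq> 0" "d19 \<noteq> 0" "d20 \<noteq> 0" "d21 \<noteq> 0" "d22 \<noteq> 0"
    unfolding d1_def d2_def d3_def d4_def d5_def d6_def d7_def d8_def d9_def d10_def d11_def d12_def d13_def d14_def d15_def d16_def d17_def d18_def d19_def d20_def d21_def d22_def using m by (auto simp: add_nonneg_eq_0_iff)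
  have "R4 (Suc n) 0 * rho4 n 0 - (R4 n 0 * q4 n) = (((55/9 + 89/9*0 + 11/2*0^2 + 0^3 + 23*(1 + m) + 24*(1 + m)*0 + 13/2*(1 + m)*0^2 + 55/2*(1 + m)^2 + 14*(1 + m)^2*0 + 21/2*(1 + m)^3) / (d1 * d2 * d3)) * ((m + 1) * (m + 5/3) * (m + 1/3) / (4 * d4) * ((0 + m + 2/3) / (d5 * d6)) * ((0 + m + 4/3) / (d7 * d8)))) - (((55/9 + 89/9*0 + 11/2*0^2 + 0^3 + 23*m + 24*m*0 + 13/2*m*0^2 + 55/2*m^2 + 14*m^2*0 + 21/2*m^3) / (d5 * d7 * d9)) * (((189*(m+1)^3 + 495*(m+1)^2 + 414*(m+1) + 110) / (d10 * d11 * d12 * d13)) / (d14 / (d15 * d16 * d17 * d18)) * (((3*m+1)*(3*m+2)*(3*m+3))^2 / (d15 * d19 * d20 * d21 * d17 * d22))))"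
    unfolding R4_def rho4_def q4_def m_def d1_def d2_def d3_def d4_def d5_def d6_def d7_def d8_def d9_def d10_def d11_def d12_def d13_def d14_def d15_def d16_def d17_def d18_def d19_def d20_def d21_def d22_def by simp
  also have "\<dots> = 0"
    apply (simp add: field_simps nz)
    apply (unfold d1_def d2_def d3_def d4_def d5_def d6_def d7_def d8_def d9_def d10_def d11_def d12_def d13_def d14_def d15_def d16_def d17_def d18_def d19_def d20_def d21_def d22_def)
    apply algebra
    done
  finally show ?thesis by simp
qed

lemma T4_eq: "T4 n = 16 * (R4 n 0 * F4 n 0)"
proof (induction n)
  case 0
  show ?case by (simp add: T4_def R4_def F4_def C4_def)
next
  case (Suc n)
  have "T4 (Suc n) = 16 * (R4 n 0 * F4 n 0) * q4 n" using Suc T4_Suc by simp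
  also have "\<dots> = 16 * (R4 (Suc n) 0 * F4 (Suc n) 0)"
    using R4_rho_q[of n] by (simp add: F4_rho)
  finally show ?case .
qed

lemma series4: "(\<lambda>n. T4 n) sums (16 * (1/2 - sqrt 3 * pi / 18))"
  unfolding T4_eq by (rule sums_mult[OF S4_sums])

definition sig5 :: "nat \<Rightarrow> nat \<Rightarrow> real" where
  "sig5 n k = (real k + real n + 2/3) / (real k + 2*real n + 5/3) * ((real k + 2*real n + 4/3) / (real k + 2*real n + 7/3))"
definition rho5 :: "nat \<Rightarrow> nat \<Rightarrow> real" where
  "rho5 n k = - (real n + 5/3) * ((real k + real n + 2/3) / ((real k + 2*real n + 5/3) * (real k + 2*real n + 8/3))) * ((real k + 2*real n + 4/3) / (real k + 2*real n + 10/3))"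
definition R5 :: "nat \<Rightarrow> nat \<Rightarrow> real" where
  "R5 n k = (185/27 + 104/9*real k + 19/3*real k^2 + real k^3 + 211/9*real n + 80/3*real n*real k + 7*real n*real k^2 + 80/3*real n^2 + 15*real n^2*real k + 10*real n^3) / ((real k + 2*real n + 5/3) * (real k + 2*real n + 7/3) * (real n + 1))"
definition q5 :: "nat \<Rightarrow> real" where
  "q5 n = ((270*(real n+1)^3 + 720*(real n+1)^2 + 633*(real n+1) + 185) / (((real n+1)+1) * (6*(real n+1)+7))) / ((270*real n^3 + 720*real n^2 + 633*real n + 185) / ((real n+1) * (6*real n+7))) * ((real n + 2/3)^2 / ((real n + 4/3) * (real n + 11/6))) * (- (1/4))"
definition C5 :: "nat \<Rightarrow> real" where
  "C5 n = (-1)^n * pochhammer (5/3) n / 9"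
definition F5 :: "nat \<Rightarrow> nat \<Rightarrow> real" where
  "F5 n k = C5 n / (pochhammer (real k + (real n + 2/3)) (Suc n) * (real k + (2 * real n + 4/3)))"

lemma C5_Suc: "C5 (Suc n) = C5 n * (- (real n + 5/3))"
  unfolding C5_def pS by (simp add: algebra_simps)

lemma F5_sig: "F5 n (Suc k) = sig5 n k * F5 n k"
proof -
  define a where "a = real k + (real n + 2/3)"
  define b where "b = real k + (2 * real n + 4/3)"
  have a: "0 < a" and b: "0 < b" by (simp_all add: a_def b_def add_pos_nonneg)
  have pa: "0 < pochhammer a (Suc n)" using a by (simp add: poch_pos)
  have ea: "real (Suc k) + (real n + 2/3) = a + 1" by (simp add: a_def)
  have eb: "real (Suc k) + (2 * real n + 4/3) = b + 1" by (simp add: b_def)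
  have "F5 n (Suc k) = C5 n / (pochhammer (a+1) (Suc n) * (b+1))"
    unfolding F5_def ea eb ..
  also have "\<dots> = C5 n / (pochhammer a (Suc n) * (a + real (Suc n)) / a * (b + 1))"
    using a by (simp add: pU)
  also have "\<dots> = (a / (a + real (Suc n))) * (b / (b + 1)) * (C5 n / (pochhammer a (Suc n) * b))"
    using a b pa by (simp add: field_simps)
  also have "\<dots> = sig5 n k * F5 n k"
    unfolding sig5_def F5_def a_def b_def by (simp add: algebra_simps)
  finally show ?thesis .
qed

lemma F5_rho: "F5 (Suc n) k = rho5 n k * F5 n k"
proof -
  define a where "a = real k + (real n + 2/3)"
  define b where "b = real k + (2 * real n + 4/3)"
  have a: "0 < a" and b: "0 < b" by (simp_all add: a_def b_def add_pos_nonneg)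
  have pa: "0 < pochhammer a (Suc n)" using a by (simp add: poch_pos)
  have ea: "real k + (real (Suc n) + 2/3) = a + 1" by (simp add: a_def)
  have eb: "real k + (2 * real (Suc n) + 4/3) = b + 2" by (simp add: b_def)
  have "F5 (Suc n) k = C5 (Suc n) / (pochhammer (a+1) (Suc (Suc n)) * (b+2))"
    unfolding F5_def ea eb ..
  also have "\<dots> = C5 (Suc n) / (pochhammer a (Suc n) * (a + real (Suc n)) * (a + real (Suc (Suc n))) / a * (b+2))"
    using a by (simp add: pU pS[of a "Suc n"])
  also have "\<dots> = C5 (Suc n) * a * b / ((a + real (Suc n)) * (a + real (Suc (Suc n))) * (b+2)) * (1 / (pochhammer a (Suc n) * b))"
    using a b pa by (simp add: field_simps)
  also have "\<dots> = rho5 n k * F5 n k"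
    unfolding rho5_def F5_def C5_Suc a_def b_def by (simp add: field_simps)
  finally show ?thesis .
qed

lemma rat5: "rho5 n k - 1 = R5 n (Suc k) * sig5 n k - R5 n k"
proof -
  define m where "m = real n"
  have m: "0 \<le> m" by (simp add: m_def)
  define x where "x = real k"
  have x: "0 \<le> x" by (simp add: x_def)
  define d1 where "d1 = x + 2*m + 5/3"
  define d2 where "d2 = x + 2*m + 8/3"
  define d3 where "d3 = x + 2*m + 10/3"
  define d4 where "d4 = (1 + x) + 2*m + 5/3"
  define d5 where "d5 = (1 + x) + 2*m + 7/3"
  define d6 where "d6 = m + 1"
  define d7 where "d7 = x + 2*m + 7/3"
  have nz: "d1 \<noteq> 0" "d2 \<noteq> 0" "d3 \<noteq> 0" "d4 \<noteq> 0" "d5 \<noteq> 0" "d6 \<noteq> 0" "d7 \<noteq> 0"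
    unfolding d1_def d2_def d3_def d4_def d5_def d6_def d7_def using m x by (auto simp: add_nonneg_eq_0_iff)
  have "rho5 n k - 1 - (R5 n (Suc k) * sig5 n k - R5 n k) = ((- (m + 5/3) * ((x + m + 2/3) / (d1 * d2)) * ((x + 2*m + 4/3) / d3))) - ((1)) - (((185/27 + 104/9*(1 + x) + 19/3*(1 + x)^2 + (1 + x)^3 + 211/9*m + 80/3*m*(1 + x) + 7*m*(1 + x)^2 + 80/3*m^2 + 15*m^2*(1 + x) + 10*m^3) / (d4 * d5 * d6)) * ((x + m + 2/3) / d1 * ((x + 2*m + 4/3) / d7))) + (((185/27 + 104/9*x + 19/3*x^2 + x^3 + 211/9*m + 80/3*m*x + 7*m*x^2 + 80/3*m^2 + 15*m^2*x + 10*m^3) / (d1 * d7 * d6)))"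
    unfolding rho5_def R5_def sig5_def m_def x_def d1_def d2_def d3_def d4_def d5_def d6_def d7_def by simp
  also have "\<dots> = 0"
    apply (simp add: field_simps nz)
    apply (unfold d1_def d2_def d3_def d4_def d5_def d6_def d7_def)
    apply algebra
    done
  finally show ?thesis by simp
qed

lemma F5_0: "F5 0 k = fS k"
  by (simp add: F5_def C5_def fS_def field_simps)

definition B5 :: "nat \<Rightarrow> real" where
  "B5 n = 9 * (real n + 2/3) * (2 * real n + 4/3) * \<bar>F5 n 0\<bar>"

lemma F5_bound: "\<bar>F5 n k\<bar> \<le> B5 n * fS k"
proof -
  have "\<bar>C5 n / (pochhammer (real k + (real n + 2/3)) (Suc n) * (real k + (2 * real n + 4/3)))\<bar>
     \<le> (9 * (real n + 2/3) * (2 * real n + 4/3) * \<bar>C5 n / (pochhammer (real n + 2/3) (Suc n) * (2 * real n + 4/3))\<bar>)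
        * (1 / ((3 * real k + 2) * (3 * real k + 4)))"
  proof (rule bound_gen)
    show "0 < pochhammer (real n + 2/3) (Suc n)" by (rule poch_pos) (simp add: add_pos_nonneg)
    show "(real k + (real n + 2/3)) / (real n + 2/3) * pochhammer (real n + 2/3) (Suc n)
          \<le> pochhammer (real k + (real n + 2/3)) (Suc n)"
      by (rule poch_lower) (simp_all add: add_pos_nonneg)
    have "2 * real n + 4/3 \<noteq> 0" by (simp add: add_nonneg_eq_0_iff)
    then show "(real k + (2 * real n + 4/3)) / (2 * real n + 4/3) * (2 * real n + 4/3) \<le> real k + (2 * real n + 4/3)"
      by simp
  qed (simp_all add: add_pos_nonneg)
  then show ?thesis unfolding B5_def F5_def fS_def by simp
qed

lemma B5_lim: "B5 \<longlonglongrightarrow> 0"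
proof (rule ratio_lim0)
  show "B5 (Suc n) = ((real n + 5/3) * (2 * real n + 10/3) / ((real n + 2/3) * (2 * real n + 4/3)) * \<bar>rho5 n 0\<bar>) * B5 n" for n
  proof -
    define p where "p = real n + 2/3"
    define q where "q = 2 * real n + 4/3"
    have pq: "p \<noteq> 0" "q \<noteq> 0" unfolding p_def q_def by (simp_all add: add_nonneg_eq_0_iff)
    have "B5 (Suc n) = 9 * (p + 1) * (q + 2) * (\<bar>rho5 n 0\<bar> * \<bar>F5 n 0\<bar>)"
      unfolding B5_def F5_rho p_def q_def by (simp add: abs_mult algebra_simps)
    also have "\<dots> = ((p + 1) * (q + 2) / (p * q) * \<bar>rho5 n 0\<bar>) * (9 * p * q * \<bar>F5 n 0\<bar>)"
      using pq by (simp add: field_simps)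
    also have "\<dots> = ((real n + 5/3) * (2 * real n + 10/3) / ((real n + 2/3) * (2 * real n + 4/3)) * \<bar>rho5 n 0\<bar>) * B5 n"
      unfolding B5_def p_def q_def by (simp add: algebra_simps)
    finally show ?thesis .
  qed
  show "0 \<le> B5 n" for n by (simp add: B5_def)
  show "(\<lambda>n. (real n + 5/3) * (2 * real n + 10/3) / ((real n + 2/3) * (2 * real n + 4/3)) * \<bar>rho5 n 0\<bar>) \<longlonglongrightarrow> 1/4"
    unfolding rho5_def by simp real_asymp
qed simp

lemma R5_lim: "(\<lambda>k. R5 n k * fS k) \<longlonglongrightarrow> 0"
  unfolding R5_def fS_def by real_asymp

lemma S5_sums: "(\<lambda>n. R5 n 0 * F5 n 0) sums (1/2 - sqrt 3 * pi / 18)"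
  by (rule master[OF F5_0 F5_rho F5_sig rat5 F5_bound B5_lim R5_lim])

definition T5 :: "nat \<Rightarrow> real" where
  "T5 n = (270 * real n ^ 3 + 720 * real n ^ 2 + 633 * real n + 185) / ((real n + 1) * (6 * real n + 7))
           * (pochhammer (2/3) n ^ 2 / (pochhammer (4/3) n * pochhammer (11/6) n))
           * (1 / (-4) ^ n)"

lemma T5_Suc: "T5 (Suc n) = T5 n * q5 n"
proof -
  define m where "m = real n"
  have m: "0 \<le> m" by (simp add: m_def)
  define W where "W k = pochhammer (2/3) k ^ 2 / (pochhammer (4/3) k * pochhammer (11/6::real) k)" for k
  define r where "r = (m + 2/3)^2 / ((m + 4/3) * (m + 11/6))"
  have W: "W (Suc n) = W n * r"
  proof -
    have nz: "pochhammer (11/6::real) n \<noteq> 0" "pochhammer (4/3::real) n \<noteq> 0"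
      using poch_pos[of "11/6" n] poch_pos[of "4/3" n] by auto
    have nz2: "m + 11/6 \<noteq> 0" "m + 4/3 \<noteq> 0" using m by auto
    show ?thesis unfolding W_def r_def pS m_def using nz nz2[unfolded m_def]
      by (simp add: field_simps power2_eq_square)
  qed
  define U0 where "U0 = (270 * m ^ 3 + 720 * m ^ 2 + 633 * m + 185) / ((m + 1) * (6 * m + 7))"
  define U1 where "U1 = (270 * (m+1) ^ 3 + 720 * (m+1) ^ 2 + 633 * (m+1) + 185) / (((m+1) + 1) * (6 * (m+1) + 7))"
  have U0: "U0 \<noteq> 0" unfolding U0_def using m by (auto simp: add_nonneg_eq_0_iff)
  have T5n: "T5 n = U0 * W n * (1 / (-4) ^ n)" unfolding T5_def U0_def W_def m_def by simp
  have T5s: "T5 (Suc n) = U1 * W (Suc n) * (1 / (-4) ^ Suc n)" unfolding T5_def U1_def W_def m_def by (simp add: add.commute)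
  have q: "q5 n = U1 / U0 * r * (- (1/4))" unfolding q5_def U0_def U1_def r_def m_def ..
  show ?thesis unfolding T5n T5s q W using U0 by (simp add: field_simps)
qed

lemma R5_rho_q: "R5 (Suc n) 0 * rho5 n 0 = R5 n 0 * q5 n"
proof -
  define m where "m = real n"
  have m: "0 \<le> m" by (simp add: m_def)
  define d1 where "d1 = 0 + 2*(1 + m) + 5/3"
  define d2 where "d2 = 0 + 2*(1 + m) + 7/3"
  define d3 where "d3 = (1 + m) + 1"
  define d4 where "d4 = 0 + 2*m + 5/3"
  define d5 where "d5 = 0 + 2*m + 8/3"
  define d6 where "d6 = 0 + 2*m + 10/3"
  define d7 where "d7 = 0 + 2*m + 7/3"
  define d8 where "d8 = m + 1"
  define d9 where "d9 = (m+1)+1"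
  define d10 where "d10 = 6*(m+1)+7"
  define d11 where "d11 = 270*m^3 + 720*m^2 + 633*m + 185"
  define d12 where "d12 = m+1"
  define d13 where "d13 = 6*m+7"
  define d14 where "d14 = m + 4/3"
  define d15 where "d15 = m + 11/6"
  have nz: "d1 \<noteq> 0" "d2 \<noteq> 0" "d3 \<noteq> 0" "d4 \<noteq> 0" "d5 \<noteq> 0" "d6 \<noteq> 0" "d7 \<noteq> 0" "d8 \<noteq> 0" "d9 \<noteq> 0" "d10 \<noteq> 0" "d11 \<noteq> 0" "d12 \<noteq> 0" "d13 \<noteq> 0" "d14 \<noteq> 0" "d15 \<noteq> 0"
    unfolding d1_def d2_def d3_def d4_def d5_def d6_def d7_def d8_def d9_def d10_def d11_def d12_def d13_def d14_def d15_def using m by (auto simp: add_nonneg_eq_0_iff)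
  have "R5 (Suc n) 0 * rho5 n 0 - (R5 n 0 * q5 n) = (((185/27 + 104/9*0 + 19/3*0^2 + 0^3 + 211/9*(1 + m) + 80/3*(1 + m)*0 + 7*(1 + m)*0^2 + 80/3*(1 + m)^2 + 15*(1 + m)^2*0 + 10*(1 + m)^3) / (d1 * d2 * d3)) * (- (m + 5/3) * ((0 + m + 2/3) / (d4 * d5)) * ((0 + 2*m + 4/3) / d6))) - (((185/27 + 104/9*0 + 19/3*0^2 + 0^3 + 211/9*m + 80/3*m*0 + 7*m*0^2 + 80/3*m^2 + 15*m^2*0 + 10*m^3) / (d4 * d7 * d8)) * (((270*(m+1)^3 + 720*(m+1)^2 + 633*(m+1) + 185) / (d9 * d10)) / (d11 / (d12 * d13)) * ((m + 2/3)^2 / (d14 * d15)) * (- (1/4))))"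
    unfolding R5_def rho5_def q5_def m_def d1_def d2_def d3_def d4_def d5_def d6_def d7_def d8_def d9_def d10_def d11_def d12_def d13_def d14_def d15_def by simp
  also have "\<dots> = 0"
    apply (simp add: field_simps nz)
    apply (unfold d1_def d2_def d3_def d4_def d5_def d6_def d7_def d8_def d9_def d10_def d11_def d12_def d13_def d14_def d15_def)
    apply algebra
    done
  finally show ?thesis by simp
qed

lemma R5_nz: "R5 n 0 \<noteq> 0"
  unfolding R5_def by (simp add: add_nonneg_eq_0_iff)

lemma T5_eq: "T5 n = 120 * (R5 n 0 * F5 n 0)"
proof (induction n)
  case 0
  show ?case by (simp add: T5_def R5_def F5_def C5_def)
next
  case (Suc n)
  have "T5 (Suc n) = 120 * (R5 n 0 * F5 n 0) * q5 n" using Suc T5_Suc by simp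
  also have "\<dots> = 120 * (R5 (Suc n) 0 * F5 (Suc n) 0)"
    using R5_rho_q[of n] by (simp add: F5_rho)
  finally show ?case .
qed

lemma series5: "(\<lambda>n. T5 n) sums (120 * (1/2 - sqrt 3 * pi / 18))"
  unfolding T5_eq by (rule sums_mult[OF S5_sums])

definition sig6 :: "nat \<Rightarrow> nat \<Rightarrow> real" where
  "sig6 n k = (real k + real n + 2/3) / (real k + 2*real n + 5/3) * ((real k + 4/3) / (real k + real n + 7/3))"
definition rho6 :: "nat \<Rightarrow> nat \<Rightarrow> real" where
  "rho6 n k = - ((real n + 1) * (real n + 2/3) * (real n + 1/6) / (real n + 1/2)) *
     ((real k + real n + 2/3) / ((real k + 2*real n + 5/3) * (real k + 2*real n + 8/3) * (real k + real n + 7/3)))"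
definition R6 :: "nat \<Rightarrow> nat \<Rightarrow> real" where
  "R6 n k = (30*real n^2 + 24*real n*real k + 6*real k^2 + 45*real n + 19*real k + 16) /
      ((2*real n + 1) * (6*real k + 12*real n + 10))"

definition C6 :: "nat \<Rightarrow> real" where
  "C6 n = (-1)^n * pochhammer 1 n * pochhammer (2/3) n * pochhammer (1/6) n / (9 * pochhammer (1/2) n)"
definition F6 :: "nat \<Rightarrow> nat \<Rightarrow> real" where
  "F6 n k = C6 n / (pochhammer (real k + (real n + 2/3)) (Suc n) * pochhammer (real k + 4/3) (Suc n))"

lemma C6_Suc: "C6 (Suc n) = C6 n * (- ((real n + 1) * (real n + 2/3) * (real n + 1/6) / (real n + 1/2)))"
proof -
  define P1 where "P1 = pochhammer (1::real) n"
  define P2 where "P2 = pochhammer (2/3::real) n"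
  define P3 where "P3 = pochhammer (1/6::real) n"
  define P4 where "P4 = pochhammer (1/2::real) n"
  define s where "s = ((-1::real)^n)"
  have p: "P4 \<noteq> 0" unfolding P4_def using poch_pos[of "1/2" n] by simp
  have q: "real n + 1/2 \<noteq> 0" "1/2 + real n \<noteq> 0" "1 + 2 * real n \<noteq> 0" "1 + real n * 2 \<noteq> 0"
    by (simp_all add: add_nonneg_eq_0_iff)
  have "C6 (Suc n) = - (s * (P1 * (1 + real n)) * (P2 * (2/3 + real n)) * (P3 * (1/6 + real n)) / (9 * (P4 * (1/2 + real n))))"
    unfolding C6_def pS P1_def P2_def P3_def P4_def s_def by (simp add: add.commute)
  also have "\<dots> = - ((s * P1 * P2 * P3 / (9 * P4)) * ((real n + 1) * (real n + 2/3) * (real n + 1/6) / (real n + 1/2)))"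
    using p q by (simp add: field_simps)
  also have "\<dots> = C6 n * (- ((real n + 1) * (real n + 2/3) * (real n + 1/6) / (real n + 1/2)))"
    unfolding C6_def P1_def P2_def P3_def P4_def s_def by simp
  finally show ?thesis .
qed

lemma F6_sig: "F6 n (Suc k) = sig6 n k * F6 n k"
proof -
  define a where "a = real k + (real n + 2/3)"
  define b where "b = real k + 4/3"
  have a: "0 < a" and b: "0 < b" by (simp_all add: a_def b_def add_pos_nonneg)
  have pa: "0 < pochhammer a (Suc n)" and pb: "0 < pochhammer b (Suc n)"
    using a b by (simp_all add: poch_pos)
  have ea: "real (Suc k) + (real n + 2/3) = a + 1" by (simp add: a_def)
  have eb: "real (Suc k) + 4/3 = b + 1" by (simp add: b_def)
  have "F6 n (Suc k) = C6 n / (pochhammer (a+1) (Suc n) * pochhammer (b+1) (Suc n))"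
    unfolding F6_def ea eb ..
  also have "\<dots> = C6 n / (pochhammer a (Suc n) * (a + real (Suc n)) / a * (pochhammer b (Suc n) * (b + real (Suc n)) / b))"
    using a b by (simp add: pU)
  also have "\<dots> = (a / (a + real (Suc n))) * (b / (b + real (Suc n))) * (C6 n / (pochhammer a (Suc n) * pochhammer b (Suc n)))"
    using a b pa pb by (simp add: field_simps)
  also have "\<dots> = sig6 n k * F6 n k"
    unfolding sig6_def F6_def a_def b_def by (simp add: algebra_simps)
  finally show ?thesis .
qed

lemma F6_rho: "F6 (Suc n) k = rho6 n k * F6 n k"
proof -
  define a where "a = real k + (real n + 2/3)"
  define b where "b = real k + 4/3"
  have a: "0 < a" and b: "0 < b" by (simp_all add: a_def b_def add_pos_nonneg)
  have pa: "0 < pochhammer a (Suc n)" and pb: "0 < pochhammer b (Suc n)"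
    using a b by (simp_all add: poch_pos)
  have ea: "real k + (real (Suc n) + 2/3) = a + 1" by (simp add: a_def)
  have "F6 (Suc n) k = C6 (Suc n) / (pochhammer (a+1) (Suc (Suc n)) * pochhammer b (Suc (Suc n)))"
    unfolding F6_def ea b_def ..
  also have "\<dots> = C6 (Suc n) / (pochhammer a (Suc n) * (a + real (Suc n)) * (a + real (Suc (Suc n))) / a * (pochhammer b (Suc n) * (b + real (Suc n))))"
    using a by (simp add: pU pS[of a "Suc n"] pS[of b "Suc n"])
  also have "\<dots> = C6 (Suc n) * a / ((a + real (Suc n)) * (a + real (Suc (Suc n))) * (b + real (Suc n))) * (1 / (pochhammer a (Suc n) * pochhammer b (Suc n)))"
    using a b pa pb by (simp add: field_simps)
  also have "\<dots> = rho6 n k * F6 n k"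
    unfolding rho6_def F6_def C6_Suc a_def b_def by (simp add: field_simps)
  finally show ?thesis .
qed

lemma rat6: "rho6 n k - 1 = R6 n (Suc k) * sig6 n k - R6 n k"
proof -
  define m where "m = real n"
  define x where "x = real k"
  have m: "0 \<le> m" and x: "0 \<le> x" by (simp_all add: m_def x_def)
  define d1 where "d1 = m + 1/2"
  define d2 where "d2 = x + 2*m + 5/3"
  define d3 where "d3 = x + 2*m + 8/3"
  define d4 where "d4 = x + m + 7/3"
  define d5 where "d5 = 2*m + 1"
  define d6 where "d6 = 6*(1+x) + 12*m + 10"
  define d7 where "d7 = 6*x + 12*m + 10"
  have nz: "d1 \<noteq> 0" "d2 \<noteq> 0" "d3 \<noteq> 0" "d4 \<noteq> 0" "d5 \<noteq> 0" "d6 \<noteq> 0" "d7 \<noteq> 0"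
    unfolding d1_def d2_def d3_def d4_def d5_def d6_def d7_def using m x by auto
  have "rho6 n k - 1 - (R6 n (Suc k) * sig6 n k - R6 n k) =
    - ((m + 1) * (m + 2/3) * (m + 1/6) / d1) * ((x + m + 2/3) / (d2 * d3 * d4)) - 1
    - ((30*m^2 + 24*m*(1+x) + 6*(1+x)^2 + 45*m + 19*(1+x) + 16) / (d5 * d6) * ((x + m + 2/3) / d2 * ((x + 4/3) / d4))
       - (30*m^2 + 24*m*x + 6*x^2 + 45*m + 19*x + 16) / (d5 * d7))"
    by (simp add: rho6_def R6_def sig6_def m_def x_def d1_def d2_def d3_def d4_def d5_def d6_def d7_def)
  also have "\<dots> = ((- ((m + 1) * (m + 2/3) * (m + 1/6))) * (x + m + 2/3) * d5 * d6 * d7 - d1 * d2 * d3 * d4 * d5 * d6 * d7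
      - (30*m^2 + 24*m*(1+x) + 6*(1+x)^2 + 45*m + 19*(1+x) + 16) * (x + m + 2/3) * (x + 4/3) * d1 * d3 * d7
      + (30*m^2 + 24*m*x + 6*x^2 + 45*m + 19*x + 16) * d1 * d2 * d3 * d4 * d6) / (d1 * d2 * d3 * d4 * d5 * d6 * d7)"
    using nz by (simp add: field_simps)
  also have "\<dots> = 0"
    unfolding d1_def d2_def d3_def d4_def d5_def d6_def d7_def
    by algebra
  finally show ?thesis by simp
qed


lemma F6_0: "F6 0 k = fS k"
  by (simp add: F6_def C6_def fS_def field_simps)

definition B6 :: "nat \<Rightarrow> real" where
  "B6 n = 9 * (real n + 2/3) * (4/3) * \<bar>F6 n 0\<bar>"

lemma F6_bound: "\<bar>F6 n k\<bar> \<le> B6 n * fS k"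
proof -
  have "\<bar>C6 n / (pochhammer (real k + (real n + 2/3)) (Suc n) * pochhammer (real k + 4/3) (Suc n))\<bar>
     \<le> (9 * (real n + 2/3) * (4/3) * \<bar>C6 n / (pochhammer (real n + 2/3) (Suc n) * pochhammer (4/3) (Suc n))\<bar>)
        * (1 / ((3 * real k + 2) * (3 * real k + 4)))"
  proof (rule bound_gen)
    show "0 < pochhammer (real n + 2/3) (Suc n)" by (rule poch_pos) (simp add: add_pos_nonneg)
    show "0 < pochhammer (4/3::real) (Suc n)" by (rule poch_pos) simp
    show "(real k + (real n + 2/3)) / (real n + 2/3) * pochhammer (real n + 2/3) (Suc n)
          \<le> pochhammer (real k + (real n + 2/3)) (Suc n)"
      by (rule poch_lower) (simp_all add: add_pos_nonneg)
    show "(real k + 4/3) / (4/3) * pochhammer (4/3) (Suc n) \<le> pochhammer (real k + 4/3) (Suc n)"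
      by (rule poch_lower) simp_all
  qed simp_all
  then show ?thesis unfolding B6_def F6_def fS_def by simp
qed

lemma B6_lim: "B6 \<longlonglongrightarrow> 0"
proof (rule ratio_lim0)
  show "B6 (Suc n) = ((real n + 5/3) / (real n + 2/3) * \<bar>rho6 n 0\<bar>) * B6 n" for n
  proof -
    have "real n + 2/3 \<noteq> 0" by (simp add: add_nonneg_eq_0_iff)
    then show ?thesis unfolding B6_def F6_rho by (simp add: abs_mult field_simps)
  qed
  show "0 \<le> B6 n" for n by (simp add: B6_def)
  show "(\<lambda>n. (real n + 5/3) / (real n + 2/3) * \<bar>rho6 n 0\<bar>) \<longlonglongrightarrow> 1/4"
    unfolding rho6_def by simp real_asymp
qed simp

lemma R6_lim: "(\<lambda>k. R6 n k * fS k) \<longlonglongrightarrow> 0"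
  unfolding R6_def fS_def by real_asymp

lemma S6_sums: "(\<lambda>n. R6 n 0 * F6 n 0) sums (1/2 - sqrt 3 * pi / 18)"
  by (rule master[OF F6_0 F6_rho F6_sig rat6 F6_bound B6_lim R6_lim])


definition q6 :: "nat \<Rightarrow> real" where
  "q6 n = - (1/4) * ((30 * (real n + 1)^2 + 45 * (real n + 1) + 16) / (30 * real n ^ 2 + 45 * real n + 16)) *
     ((real n + 1/6) * (real n + 2/3)^2 * (real n + 1) / ((real n + 4/3) * (real n + 7/3) * (real n + 3/2) * (real n + 11/6)))"

definition T6 :: "nat \<Rightarrow> real" where
  "T6 n = (30 * real n ^ 2 + 45 * real n + 16)
           * (pochhammer (1/6) n * pochhammer (2/3) n ^ 2 * pochhammer 1 n
              / (pochhammer (4/3) n * pochhammer (7/3) n * pochhammer (3/2) n * pochhammer (11/6) n))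
           * (1 / (-4) ^ n)"

lemma T6_Suc: "T6 (Suc n) = T6 n * q6 n"
proof -
  define m where "m = real n"
  have m: "0 \<le> m" by (simp add: m_def)
  define W where "W k = pochhammer (1/6) k * pochhammer (2/3) k ^ 2 * pochhammer 1 k
              / (pochhammer (4/3) k * pochhammer (7/3) k * pochhammer (3/2) k * pochhammer (11/6::real) k)" for k
  define r where "r = (m + 1/6) * (m + 2/3)^2 * (m + 1) / ((m + 4/3) * (m + 7/3) * (m + 3/2) * (m + 11/6))"
  have W: "W (Suc n) = W n * r"
  proof -
    have nz: "pochhammer (4/3::real) n \<noteq> 0" "pochhammer (7/3::real) n \<noteq> 0"
        "pochhammer (3/2::real) n \<noteq> 0" "pochhammer (11/6::real) n \<noteq> 0"
      using poch_pos[of "4/3" n] poch_pos[of "7/3" n] poch_pos[of "3/2" n] poch_pos[of "11/6" n] by auto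
    have nz2: "m + 4/3 \<noteq> 0" "m + 7/3 \<noteq> 0" "m + 3/2 \<noteq> 0" "m + 11/6 \<noteq> 0"
      using m by auto
    show ?thesis unfolding W_def r_def pS m_def using nz nz2[unfolded m_def]
      by (simp add: field_simps power2_eq_square)
  qed
  define P0 where "P0 = 30 * m ^ 2 + 45 * m + 16"
  define P1 where "P1 = 30 * (m+1) ^ 2 + 45 * (m+1) + 16"
  have P0: "P0 \<noteq> 0" unfolding P0_def using m by (auto simp: add_nonneg_eq_0_iff)
  have E: "((-4::real) ^ n) \<noteq> 0" by simp
  have T6n: "T6 n = P0 * W n * (1 / (-4) ^ n)" unfolding T6_def P0_def W_def m_def ..
  have T6s: "T6 (Suc n) = P1 * W (Suc n) * (1 / (-4) ^ Suc n)" unfolding T6_def P1_def W_def m_def by simp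
  have q: "q6 n = - (1/4) * (P1 / P0) * r" unfolding q6_def P0_def P1_def r_def m_def ..
  show ?thesis unfolding T6n T6s q W using P0 E by (simp add: field_simps)
qed

lemma R6_rho_q: "R6 (Suc n) 0 * rho6 n 0 = R6 n 0 * q6 n"
proof -
  define m where "m = real n"
  have m: "0 \<le> m" by (simp add: m_def)
  define d1 where "d1 = 30 * m ^ 2 + 45 * m + 16"
  define d2 where "d2 = m + 4/3"
  define d3 where "d3 = m + 7/3"
  define d4 where "d4 = m + 3/2"
  define d5 where "d5 = m + 11/6"
  define e1 where "e1 = 2 * (m+1) + 1"
  define e2 where "e2 = 12 * (m+1) + 10"
  define e3 where "e3 = 2 * m + 1"
  define e4 where "e4 = 12 * m + 10"
  define e5 where "e5 = m + 1/2"
  define e6 where "e6 = 2 * m + 5/3"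
  define e7 where "e7 = 2 * m + 8/3"
  have nzd: "d1 \<noteq> 0" "d2 \<noteq> 0" "d3 \<noteq> 0" "d4 \<noteq> 0" "d5 \<noteq> 0"
     "e1 \<noteq> 0" "e2 \<noteq> 0" "e3 \<noteq> 0" "e4 \<noteq> 0" "e5 \<noteq> 0" "e6 \<noteq> 0" "e7 \<noteq> 0"
    unfolding d1_def d2_def d3_def d4_def d5_def e1_def e2_def e3_def e4_def e5_def e6_def e7_def
    using m by (auto simp: add_nonneg_eq_0_iff)
  have "R6 (Suc n) 0 * rho6 n 0 - R6 n 0 * q6 n =
     (30 * (m+1)^2 + 45 * (m+1) + 16) / (e1 * e2) *
       (- ((m + 1) * (m + 2/3) * (m + 1/6) / e5) * ((m + 2/3) / (e6 * e7 * d3)))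
     - d1 / (e3 * e4) * (- (1/4) * ((30 * (m + 1)^2 + 45 * (m + 1) + 16) / d1) *
      ((m + 1/6) * (m + 2/3)^2 * (m + 1) / (d2 * d3 * d4 * d5)))"
    unfolding R6_def rho6_def q6_def m_def d1_def d2_def d3_def d4_def d5_def e1_def e2_def e3_def e4_def e5_def e6_def e7_def
    by (simp add: add.commute)
  also have "\<dots> = 0"
  proof -
    have "(30 * (m+1)^2 + 45 * (m+1) + 16) / (e1 * e2) *
       (- ((m + 1) * (m + 2/3) * (m + 1/6) / e5) * ((m + 2/3) / (e6 * e7 * d3)))
     - d1 / (e3 * e4) * (- (1/4) * ((30 * (m + 1)^2 + 45 * (m + 1) + 16) / d1) *
      ((m + 1/6) * (m + 2/3)^2 * (m + 1) / (d2 * d3 * d4 * d5)))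
      = (30 * (m+1)^2 + 45 * (m+1) + 16) * (m + 1) * (m + 2/3)^2 * (m + 1/6) *
        (e1 * e2 * e5 * e6 * e7 - 4 * e3 * e4 * d2 * d4 * d5) / (4 * e1 * e2 * e5 * e6 * e7 * d3 * e3 * e4 * d2 * d4 * d5)"
      by (simp add: field_simps nzd) algebra
    also have "e1 * e2 * e5 * e6 * e7 - 4 * e3 * e4 * d2 * d4 * d5 = 0"
      unfolding d2_def d4_def d5_def e1_def e2_def e3_def e4_def e5_def e6_def e7_def by algebra
    finally show ?thesis by simp
  qed
  finally show ?thesis by simp
qed

lemma T6_eq: "T6 n = 80 * (R6 n 0 * F6 n 0)"
proof (induction n)
  case 0
  show ?case by (simp add: T6_def R6_def F6_def C6_def)
next
  case (Suc n)
  have "T6 (Suc n) = 80 * (R6 n 0 * F6 n 0) * q6 n" using Suc T6_Suc by simp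
  also have "\<dots> = 80 * (R6 (Suc n) 0 * F6 (Suc n) 0)"
    using R6_rho_q[of n] by (simp add: F6_rho)
  finally show ?case .
qed

lemma series6: "(\<lambda>n. T6 n) sums (80 * (1/2 - sqrt 3 * pi / 18))"
  unfolding T6_eq by (rule sums_mult[OF S6_sums])

theorem proposition3p2:
  fixes S1 :: real
  defines "S1 \<equiv> 1/2 - sqrt 3 * pi / 18"
  shows "((\<lambda>k::nat. 1 / ((3 * real k + 2) * (3 * real k + 4))) sums S1) \<and>
     ((\<lambda>n::nat. 1 / ((3 * real n + 1) * (3 * real n + 4) * real ((2*n+2) choose (n+1))))
           sums (2/3 * S1)) \<and>
     ((\<lambda>n::nat. (27 * real n ^ 2 + 51 * real n + 23) * pochhammer (2/3) n
           / ((3 * real n + 1) * (3 * real n + 4) * (real n + 1) * pochhammer (11/6) n)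
           * (1 / 4 ^ n)) sums (30 * S1)) \<and>
     ((\<lambda>n::nat. (189 * real n ^ 3 + 495 * real n ^ 2 + 414 * real n + 110)
           / ((6 * real n + 1) * (6 * real n + 7) * (6 * real n + 5) * (2 * real n + 1))
           * (1 / real ((6*n) choose (3*n)))) sums (16 * S1)) \<and>
     ((\<lambda>n::nat. (270 * real n ^ 3 + 720 * real n ^ 2 + 633 * real n + 185)
           / ((real n + 1) * (6 * real n + 7))
           * (pochhammer (2/3) n ^ 2 / (pochhammer (4/3) n * pochhammer (11/6) n))
           * (1 / (-4) ^ n)) sums (120 * S1)) \<and>
     ((\<lambda>n::nat. (30 * real n ^ 2 + 45 * real n + 16)
           * (pochhammer (1/6) n * pochhammer (2/3) n ^ 2 * pochhammer 1 n
              / (pochhammer (4/3) n * pochhammer (7/3) n * pochhammer (3/2) n * pochhammer (11/6) n))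
           * (1 / (-4) ^ n)) sums (80 * S1))"
  unfolding S1_def
  using S1_sums series2[unfolded T2_def] series3[unfolded T3_def] series4[unfolded T4_def]
    series5[unfolded T5_def] series6[unfolded T6_def]
  by (intro conjI) assumption+

end
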